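(* Let $(\mathsf Y,\mathcal F,\omega)$ be a probability space and $\mathsf Y=\bigcup_{k\in\mathcal K}\mathsf Y_k$ a partition into measurable sets indexed by a finite or countably infinite set $\mathcal K$, with $\omega(\mathsf Y_k)>0$ for all $k$. Let $T,S$ be Markov transition kernels on $(\mathsf Y,\mathcal F)$ with $\omega T=\omega S=\omega$. Suppose that for each $k\in\mathcal K$ there is a Markov transition kernel $T_k:\mathsf Y_k\times\mathcal F_k\to[0,1]$ with $\omega_kT_k=\omega_k$, and that there is $c\in[0,1]$ with $T(y,B)\ge cT_k(y,B)$ for all $k\in\mathcal K$, $y\in\mathsf Y_k$, $B\in\mathcal F_k$. Then $$1-\|TS^*\|_\omega^2\ \ge\ c^2\Big(1-\sup_{k\in\mathcal K}\|T_k\|_{\omega_k}^2\Big)\big(1-\|\bar S\|_{\bar\omega}\big).$$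
   Context: For a probability space $(\mathsf Y,\mathcal F,\omega)$: $L^2(\omega)$ is the Hilbert space of square-integrable real functions with $\langle f,g\rangle_\omega=\int fg\,d\omega$; $L_0^2(\omega)=\{f\in L^2(\omega):\int f\,d\omega=0\}$. A Markov transition kernel (Mtk) $T$ with $\omega T=\omega$ acts on $L_0^2(\omega)$ by $Tf(y)=\int T(y,dy')f(y')$; $\|T\|_\omega$ is its operator norm on $L_0^2(\omega)$ and $T^*$ its Hilbert adjoint on $L_0^2(\omega)$. For $k\in\mathcal K$, $\mathcal F_k$ is the restriction of $\mathcal F$ to $\mathsf Y_k$, and $\omega_k(B)=\omega(B)/\omega(\mathsf Y_k)$ for $B\in\mathcal F_k$. $\bar\omega$ is the probability measure on $\mathcal K$ with $\bar\omega(\{k\})=\omega(\mathsf Y_k)$, and $\bar S$ is the Mtk on $\mathcal K$ given by $\bar S(k,\{k'\})=\frac{1}{\omega(\mathsf Y_k)}\int_{\mathsf Y}\omega(dy)S(y,\mathsf Y_k)S(y,\mathsf Y_{k'})$; $\|\bar S\|_{\bar\omega}$ is its operator norm on $L_0^2(\bar\omega)$ and $\|T_k\|_{\omega_k}$ the operator norm of $T_k$ on $L_0^2(\omega_k)$. *)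

theory Defs
  imports "HOL-Probability.Probability"
begin

text \<open>A Markov transition kernel on a measurable space M, represented as a measurable
  map y |-> T y into the space of probability measures on M (so T y B = measure (T y) B).\<close>
definition markov_kernel :: "'a measure \<Rightarrow> ('a \<Rightarrow> 'a measure) \<Rightarrow> bool" where
  "markov_kernel M T \<longleftrightarrow> T \<in> M \<rightarrow>\<^sub>M prob_algebra M"

definition invariant :: "'a measure \<Rightarrow> ('a \<Rightarrow> 'a measure) \<Rightarrow> bool" where
  "invariant M T \<longleftrightarrow> (\<forall>B\<in>sets M. (\<integral>y. measure (T y) B \<partial>M) = measure M B)"

definition L2_0 :: "'a measure \<Rightarrow> ('a \<Rightarrow> real) set" where
  "L2_0 M = {f. f \<in> borel_measurable M \<and> integrable M (\<lambda>x. (f x)\<^sup>2) \<and> (\<integral>x. f x \<partial>M) = 0}"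

definition L2_inner :: "'a measure \<Rightarrow> ('a \<Rightarrow> real) \<Rightarrow> ('a \<Rightarrow> real) \<Rightarrow> real" where
  "L2_inner M f g = (\<integral>x. f x * g x \<partial>M)"

definition L2_norm :: "'a measure \<Rightarrow> ('a \<Rightarrow> real) \<Rightarrow> real" where
  "L2_norm M f = sqrt (\<integral>x. (f x)\<^sup>2 \<partial>M)"

definition kop :: "('a \<Rightarrow> 'a measure) \<Rightarrow> ('a \<Rightarrow> real) \<Rightarrow> ('a \<Rightarrow> real)" where
  "kop T f = (\<lambda>y. \<integral>x. f x \<partial>T y)"

definition op_norm :: "'a measure \<Rightarrow> (('a \<Rightarrow> real) \<Rightarrow> ('a \<Rightarrow> real)) \<Rightarrow> real" where
  "op_norm M A = Sup {L2_norm M (A f) | f. f \<in> L2_0 M \<and> L2_norm M f \<le> 1}"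

definition is_adjoint :: "'a measure \<Rightarrow> ('a \<Rightarrow> 'a measure) \<Rightarrow> (('a \<Rightarrow> real) \<Rightarrow> ('a \<Rightarrow> real)) \<Rightarrow> bool" where
  "is_adjoint M S Sstar \<longleftrightarrow> (\<forall>g\<in>L2_0 M. Sstar g \<in> L2_0 M) \<and>
     (\<forall>f\<in>L2_0 M. \<forall>g\<in>L2_0 M. L2_inner M (kop S f) g = L2_inner M f (Sstar g))"

definition restr_prob :: "'a measure \<Rightarrow> 'a set \<Rightarrow> 'a measure" where
  "restr_prob M A = scale_measure (ennreal (1 / measure M A)) (restrict_space M A)"

definition bar_measure :: "'a measure \<Rightarrow> ('k \<Rightarrow> 'a set) \<Rightarrow> 'k measure" where
  "bar_measure M Y = density (count_space UNIV) (\<lambda>k. ennreal (measure M (Y k)))"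

definition bar_kernel :: "'a measure \<Rightarrow> ('k \<Rightarrow> 'a set) \<Rightarrow> ('a \<Rightarrow> 'a measure) \<Rightarrow> 'k \<Rightarrow> 'k measure" where
  "bar_kernel M Y S k = density (count_space UNIV)
     (\<lambda>k'. ennreal (1 / measure M (Y k) * (\<integral>y. measure (S y) (Y k) * measure (S y) (Y k') \<partial>M)))"

end

theory Submission
  imports Defs
begin

lemma jensen_sq:
  fixes f :: "'a \<Rightarrow> real"
  assumes "prob_space N" "f \<in> borel_measurable N" "integrable N (\<lambda>x. (f x)\<^sup>2)"
  shows "(\<integral>x. f x \<partial>N)\<^sup>2 \<le> (\<integral>x. (f x)\<^sup>2 \<partial>N)"
proof -
  interpret prob_space N by fact
  have i: "integrable N f" using square_integrable_imp_integrable[OF assms(2,3)] .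
  have "variance f = expectation (\<lambda>x. (f x)\<^sup>2) - (expectation f)\<^sup>2"
    by (rule variance_eq[OF i assms(3)])
  moreover have "0 \<le> variance f" by (rule variance_positive)
  ultimately show ?thesis by linarith
qed

lemma mk_space:
  assumes "markov_kernel M K" "y \<in> space M"
  shows "prob_space (K y)" "sets (K y) = sets M"
proof -
  have "K y \<in> space (prob_algebra M)"
    using assms unfolding markov_kernel_def by (blast intro: measurable_space)
  then show "prob_space (K y)" "sets (K y) = sets M" by (auto simp: space_prob_algebra)
qed

lemma mk_sub:
  assumes "markov_kernel M K" shows "K \<in> M \<rightarrow>\<^sub>M subprob_algebra M"
  using assms measurable_prob_algebraD unfolding markov_kernel_def by blast

lemma kop_meas:
  assumes "markov_kernel M K" "f \<in> borel_measurable M"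
  shows "kop K f \<in> borel_measurable M"
proof -
  have "(\<lambda>N. integral\<^sup>L N f) \<in> subprob_algebra M \<rightarrow>\<^sub>M borel"
    by (rule integral_measurable_subprob_algebra[OF assms(2)])
  from measurable_compose[OF mk_sub[OF assms(1)] this] show ?thesis
    unfolding kop_def by (simp add: o_def)
qed

lemma mk_bind:
  assumes "prob_space M" "markov_kernel M K" "invariant M K"
  shows "bind M K = M"
proof (rule measure_eqI)
  interpret prob_space M by fact
  have ne: "space M \<noteq> {}" by (rule not_empty)
  show "sets (bind M K) = sets M"
    by (rule sets_bind[OF _ ne]) (rule mk_space(2)[OF assms(2)])
  fix A assume "A \<in> sets (bind M K)"
  then have A: "A \<in> sets M" using \<open>sets (bind M K) = sets M\<close> by simp
  have "emeasure (bind M K) A = (\<integral>\<^sup>+y. emeasure (K y) A \<partial>M)"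
    by (rule emeasure_bind[OF ne mk_sub[OF assms(2)] A])
  also have "\<dots> = (\<integral>\<^sup>+y. ennreal (measure (K y) A) \<partial>M)"
    apply (rule nn_integral_cong)
    using mk_space[OF assms(2)] finite_measure.emeasure_eq_measure prob_space.finite_measure by blast
  also have "\<dots> = ennreal (\<integral>y. measure (K y) A \<partial>M)"
  proof (rule nn_integral_eq_integral)
    have m: "(\<lambda>y. measure (K y) A) \<in> borel_measurable M"
    proof -
      have "(\<lambda>N. emeasure N A) \<in> borel_measurable (subprob_algebra M)"
        using A by (rule measurable_emeasure_subprob_algebra)
      from measurable_compose[OF mk_sub[OF assms(2)] this]
      have "(\<lambda>y. emeasure (K y) A) \<in> borel_measurable M" by (simp add: o_def)
      then show ?thesis unfolding measure_def by (rule borel_measurable_enn2real)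
    qed
    show "integrable M (\<lambda>y. measure (K y) A)"
      apply (rule integrable_const_bound[where B=1])
       apply (rule AE_I2)
      using mk_space[OF assms(2)] prob_space.prob_le_1 apply fastforce
      by (rule m)
    show "AE x in M. 0 \<le> measure (K x) A" by simp
  qed
  also have "\<dots> = emeasure M A"
    using assms(3) A unfolding invariant_def by (simp add: emeasure_eq_measure)
  finally show "emeasure (bind M K) A = emeasure M A" .
qed

lemma mk_nn:
  assumes "prob_space M" "markov_kernel M K" "invariant M K" "f \<in> borel_measurable M"
  shows "(\<integral>\<^sup>+y. (\<integral>\<^sup>+x. f x \<partial>K y) \<partial>M) = (\<integral>\<^sup>+x. f x \<partial>M)"
proof -
  have "(\<integral>\<^sup>+x. f x \<partial>(bind M K)) = (\<integral>\<^sup>+y. (\<integral>\<^sup>+x. f x \<partial>K y) \<partial>M)"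
    by (rule nn_integral_bind[OF assms(4) mk_sub[OF assms(2)]])
  then show ?thesis using mk_bind[OF assms(1-3)] by simp
qed

lemma enn2real_int:
  fixes g :: "'a \<Rightarrow> ennreal"
  assumes g: "g \<in> borel_measurable M" and fin: "(\<integral>\<^sup>+y. g y \<partial>M) < \<infinity>"
  shows "integrable M (\<lambda>y. enn2real (g y))" "(\<integral>y. enn2real (g y) \<partial>M) = enn2real (\<integral>\<^sup>+y. g y \<partial>M)"
proof -
  have ae: "AE y in M. g y \<noteq> \<infinity>" using nn_integral_PInf_AE[OF g] fin by simp
  have eq: "(\<integral>\<^sup>+y. ennreal (enn2real (g y)) \<partial>M) = (\<integral>\<^sup>+y. g y \<partial>M)"
    apply (rule nn_integral_cong_AE) using ae by eventually_elim (simp add: less_top)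
  have m: "(\<lambda>y. enn2real (g y)) \<in> borel_measurable M" using g by (rule borel_measurable_enn2real)
  show "integrable M (\<lambda>y. enn2real (g y))"
    by (rule integrableI_nonneg[OF m]) (use eq fin in auto)
  show "(\<integral>y. enn2real (g y) \<partial>M) = enn2real (\<integral>\<^sup>+y. g y \<partial>M)"
    by (subst integral_eq_nn_integral[OF m]) (auto simp: eq)
qed

lemma kop_nn_meas:
  fixes f :: "'a \<Rightarrow> ennreal"
  assumes "markov_kernel M K" "f \<in> borel_measurable M"
  shows "(\<lambda>y. \<integral>\<^sup>+x. f x \<partial>K y) \<in> borel_measurable M"
proof -
  have "(\<lambda>N. integral\<^sup>N N f) \<in> borel_measurable (subprob_algebra M)"
    by (rule nn_integral_measurable_subprob_algebra[OF assms(2)])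
  from measurable_compose[OF mk_sub[OF assms(1)] this] show ?thesis by (simp add: o_def)
qed

lemma mk_int:
  fixes f :: "'a \<Rightarrow> real"
  assumes "prob_space M" "markov_kernel M K" "invariant M K" "integrable M f"
  shows "AE y in M. integrable (K y) f" "integrable M (kop K f)" "(\<integral>y. kop K f y \<partial>M) = (\<integral>x. f x \<partial>M)"
proof -
  have fm[measurable]: "f \<in> borel_measurable M" using assms(4) by simp
  have fK: "f \<in> borel_measurable (K y)" if "y \<in> space M" for y
    using fm measurable_cong_sets[OF mk_space(2)[OF assms(2) that] refl] by blast
  have fin: "(\<integral>\<^sup>+x. ennreal (norm (f x)) \<partial>M) < \<infinity>"
    using assms(4) by (simp add: integrable_iff_bounded)
  have nmeas: "(\<lambda>x. ennreal (norm (f x))) \<in> borel_measurable M" by measurable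
  have e1: "(\<integral>\<^sup>+y. (\<integral>\<^sup>+x. ennreal (norm (f x)) \<partial>K y) \<partial>M) = (\<integral>\<^sup>+x. ennreal (norm (f x)) \<partial>M)"
    by (rule mk_nn[OF assms(1-3) nmeas])
  have ae: "AE y in M. (\<integral>\<^sup>+x. ennreal (norm (f x)) \<partial>K y) \<noteq> \<infinity>"
    by (rule nn_integral_PInf_AE[OF kop_nn_meas[OF assms(2) nmeas]]) (use e1 fin in auto)
  show aeI: "AE y in M. integrable (K y) f"
    using ae by (rule AE_mp) (auto intro!: AE_I2 simp: integrable_iff_bounded fK less_top)
  have km: "kop K f \<in> borel_measurable M" by (rule kop_meas[OF assms(2) fm])
  have bound: "ennreal (norm (kop K f y)) \<le> (\<integral>\<^sup>+x. ennreal (norm (f x)) \<partial>K y)" for y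
  proof (cases "integrable (K y) f")
    case True then show ?thesis unfolding kop_def by (rule integral_norm_bound_ennreal)
  next
    case False then show ?thesis unfolding kop_def by (simp add: not_integrable_integral_eq)
  qed
  show "integrable M (kop K f)"
    unfolding integrable_iff_bounded
  proof
    show "kop K f \<in> borel_measurable M" by (rule km)
    have "(\<integral>\<^sup>+y. ennreal (norm (kop K f y)) \<partial>M) \<le> (\<integral>\<^sup>+y. (\<integral>\<^sup>+x. ennreal (norm (f x)) \<partial>K y) \<partial>M)"
      by (rule nn_integral_mono) (rule bound)
    then show "(\<integral>\<^sup>+y. ennreal (norm (kop K f y)) \<partial>M) < \<infinity>" using e1 fin by simp
  qed
  define P where "P y = (\<integral>\<^sup>+x. ennreal (f x) \<partial>K y)" for y
  define Q where "Q y = (\<integral>\<^sup>+x. ennreal (- f x) \<partial>K y)" for y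
  have Pm: "P \<in> borel_measurable M" unfolding P_def by (rule kop_nn_meas[OF assms(2)]) measurable
  have Qm: "Q \<in> borel_measurable M" unfolding Q_def by (rule kop_nn_meas[OF assms(2)]) measurable
  have PI: "(\<integral>\<^sup>+y. P y \<partial>M) = (\<integral>\<^sup>+x. ennreal (f x) \<partial>M)"
    unfolding P_def by (rule mk_nn[OF assms(1-3)]) measurable
  have QI: "(\<integral>\<^sup>+y. Q y \<partial>M) = (\<integral>\<^sup>+x. ennreal (- f x) \<partial>M)"
    unfolding Q_def by (rule mk_nn[OF assms(1-3)]) measurable
  have fP: "(\<integral>\<^sup>+x. ennreal (f x) \<partial>M) < \<infinity>"
    by (rule le_less_trans[OF _ fin]) (rule nn_integral_mono, simp)
  have fQ: "(\<integral>\<^sup>+x. ennreal (- f x) \<partial>M) < \<infinity>"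
    by (rule le_less_trans[OF _ fin]) (rule nn_integral_mono, simp)
  note iP = enn2real_int[OF Pm, unfolded PI, OF fP]
  note iQ = enn2real_int[OF Qm, unfolded QI, OF fQ]
  have "AE y in M. kop K f y = enn2real (P y) - enn2real (Q y)"
    using aeI by (rule AE_mp) (auto intro!: AE_I2 simp: kop_def P_def Q_def real_lebesgue_integral_def)
  then have "(\<integral>y. kop K f y \<partial>M) = (\<integral>y. enn2real (P y) - enn2real (Q y) \<partial>M)"
    by (intro integral_cong_AE km) (auto intro!: borel_measurable_diff borel_measurable_enn2real Pm Qm)
  also have "\<dots> = enn2real (\<integral>\<^sup>+x. ennreal (f x) \<partial>M) - enn2real (\<integral>\<^sup>+x. ennreal (- f x) \<partial>M)"
    using iP iQ by (simp add: Bochner_Integration.integral_diff[OF iP(1) iQ(1)] del: ennreal_neg)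
  also have "\<dots> = (\<integral>x. f x \<partial>M)" by (rule real_lebesgue_integral_def[OF assms(4), symmetric])
  finally show "(\<integral>y. kop K f y \<partial>M) = (\<integral>x. f x \<partial>M)" .
qed

lemma mk_L2:
  fixes f :: "'a \<Rightarrow> real"
  assumes "prob_space M" "markov_kernel M K" "invariant M K" "f \<in> borel_measurable M"
    "integrable M (\<lambda>x. (f x)\<^sup>2)"
  shows "integrable M (\<lambda>y. (kop K f y)\<^sup>2)" "(\<integral>y. (kop K f y)\<^sup>2 \<partial>M) \<le> (\<integral>x. (f x)\<^sup>2 \<partial>M)"
proof -
  note I = mk_int[OF assms(1-3) assms(5)]
  have fK: "f \<in> borel_measurable (K y)" if "y \<in> space M" for y
    using assms(4) measurable_cong_sets[OF mk_space(2)[OF assms(2) that] refl] by blast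
  have ae: "AE y in M. (kop K f y)\<^sup>2 \<le> kop K (\<lambda>x. (f x)\<^sup>2) y"
    using I(1) by (rule AE_mp) (auto intro!: AE_I2 jensen_sq mk_space[OF assms(2)] fK simp: kop_def)
  have m: "(\<lambda>y. (kop K f y)\<^sup>2) \<in> borel_measurable M"
    using kop_meas[OF assms(2,4)] by measurable
  show i: "integrable M (\<lambda>y. (kop K f y)\<^sup>2)"
  proof (rule Bochner_Integration.integrable_bound[OF I(2) m])
    show "AE y in M. norm ((kop K f y)\<^sup>2) \<le> norm (kop K (\<lambda>x. (f x)\<^sup>2) y)"
      using ae by eventually_elim auto
  qed
  have "(\<integral>y. (kop K f y)\<^sup>2 \<partial>M) \<le> (\<integral>y. kop K (\<lambda>x. (f x)\<^sup>2) y \<partial>M)"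
    by (rule integral_mono_AE[OF i I(2) ae])
  then show "(\<integral>y. (kop K f y)\<^sup>2 \<partial>M) \<le> (\<integral>x. (f x)\<^sup>2 \<partial>M)" using I(3) by simp
qed

lemma L2_norm_nonneg: "0 \<le> L2_norm M f"
  unfolding L2_norm_def by simp

lemma zero_L2_0: "(\<lambda>x. 0) \<in> L2_0 M"
  unfolding L2_0_def by simp

lemma scale_L2_0: "f \<in> L2_0 M \<Longrightarrow> (\<lambda>x. r * f x) \<in> L2_0 M"
  unfolding L2_0_def by (auto simp: power_mult_distrib)

lemma L2_norm_scale: "L2_norm M (\<lambda>x. r * f x) = \<bar>r\<bar> * L2_norm M f"
  unfolding L2_norm_def by (simp add: power_mult_distrib real_sqrt_mult)

lemma mk_L2_0:
  assumes "prob_space M" "markov_kernel M K" "invariant M K" "f \<in> L2_0 M"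
  shows "kop K f \<in> L2_0 M" "L2_norm M (kop K f) \<le> L2_norm M f"
proof -
  have fm: "f \<in> borel_measurable M" and f2: "integrable M (\<lambda>x. (f x)\<^sup>2)" and f0: "(\<integral>x. f x \<partial>M) = 0"
    using assms(4) unfolding L2_0_def by auto
  interpret prob_space M by fact
  have fi: "integrable M f" using square_integrable_imp_integrable[OF fm f2] .
  note L = mk_L2[OF assms(1-3) fm f2]
  show "kop K f \<in> L2_0 M" unfolding L2_0_def
    using kop_meas[OF assms(2) fm] L(1) mk_int(3)[OF assms(1-3) fi] f0 by auto
  show "L2_norm M (kop K f) \<le> L2_norm M f" unfolding L2_norm_def using L(2) by simp
qed

lemma kop_hom: "kop K (\<lambda>x. r * f x) = (\<lambda>y. r * kop K f y)"
  unfolding kop_def by simp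

lemma op_norm_props:
  assumes hom: "\<And>f r. A (\<lambda>x. r * f x) = (\<lambda>x. r * A f x)"
    and bnd: "\<And>f. f \<in> L2_0 M \<Longrightarrow> L2_norm M (A f) \<le> L2_norm M f"
  shows "0 \<le> op_norm M A" "op_norm M A \<le> 1"
    "\<And>f. f \<in> L2_0 M \<Longrightarrow> L2_norm M (A f) \<le> op_norm M A * L2_norm M f"
proof -
  define SS where "SS = {L2_norm M (A f) | f. f \<in> L2_0 M \<and> L2_norm M f \<le> 1}"
  have on: "op_norm M A = Sup SS" unfolding op_norm_def SS_def ..
  have z: "L2_norm M (A (\<lambda>x. 0)) \<in> SS" unfolding SS_def using zero_L2_0[of M]
    by (auto simp: L2_norm_def)
  have ne: "SS \<noteq> {}" using z by auto
  have le1: "\<And>x. x \<in> SS \<Longrightarrow> x \<le> 1" unfolding SS_def using bnd by force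
  have bdd: "bdd_above SS" by (rule bdd_aboveI[where M=1]) (rule le1)
  show "0 \<le> op_norm M A" unfolding on
    by (rule order.trans[OF L2_norm_nonneg cSup_upper[OF z bdd]])
  show "op_norm M A \<le> 1" unfolding on by (rule cSup_least[OF ne le1])
  fix f assume f: "f \<in> L2_0 M"
  show "L2_norm M (A f) \<le> op_norm M A * L2_norm M f"
  proof (cases "L2_norm M f = 0")
    case True then show ?thesis using bnd[OF f] by simp
  next
    case False
    define r where "r = L2_norm M f"
    have rp: "r > 0" using False L2_norm_nonneg[of M f] unfolding r_def by simp
    have g: "(\<lambda>x. (1/r) * f x) \<in> L2_0 M" by (rule scale_L2_0[OF f])
    have "L2_norm M (\<lambda>x. (1/r) * f x) = \<bar>1/r\<bar> * r" by (simp only: L2_norm_scale r_def)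
    then have gn: "L2_norm M (\<lambda>x. (1/r) * f x) = 1" using rp by simp
    have "L2_norm M (A (\<lambda>x. (1/r) * f x)) \<in> SS" unfolding SS_def using g gn by auto
    then have "L2_norm M (A (\<lambda>x. (1/r) * f x)) \<le> op_norm M A" unfolding on by (rule cSup_upper[OF _ bdd])
    then have "L2_norm M (\<lambda>x. (1/r) * A f x) \<le> op_norm M A" by (simp only: hom)
    then have "\<bar>1/r\<bar> * L2_norm M (A f) \<le> op_norm M A" by (simp only: L2_norm_scale)
    then have "(1/r) * L2_norm M (A f) \<le> op_norm M A" using rp by simp
    then show ?thesis using rp unfolding r_def[symmetric] by (simp add: field_simps)
  qed
qed

lemma op_norm_kop:
  assumes "prob_space M" "markov_kernel M K" "invariant M K"
  shows "0 \<le> op_norm M (kop K)" "op_norm M (kop K) \<le> 1"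
    "\<And>f. f \<in> L2_0 M \<Longrightarrow> L2_norm M (kop K f) \<le> op_norm M (kop K) * L2_norm M f"
  using op_norm_props[of "kop K" M, OF kop_hom mk_L2_0(2)[OF assms]] by auto

lemma cs_int:
  fixes f g :: "'a \<Rightarrow> real"
  assumes fm: "f \<in> borel_measurable M" and gm: "g \<in> borel_measurable M"
    and f2: "integrable M (\<lambda>x. (f x)\<^sup>2)" and g2: "integrable M (\<lambda>x. (g x)\<^sup>2)"
  shows "integrable M (\<lambda>x. f x * g x)" "(\<integral>x. f x * g x \<partial>M)\<^sup>2 \<le> (\<integral>x. (f x)\<^sup>2 \<partial>M) * (\<integral>x. (g x)\<^sup>2 \<partial>M)"
proof -
  have pw: "\<bar>f x * g x\<bar> \<le> (f x)\<^sup>2 + (g x)\<^sup>2" for x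
  proof -
    have "0 \<le> (\<bar>f x\<bar> - \<bar>g x\<bar>)\<^sup>2" by simp
    then have "2 * (\<bar>f x\<bar> * \<bar>g x\<bar>) \<le> (f x)\<^sup>2 + (g x)\<^sup>2" by (simp add: power2_eq_square algebra_simps)
    moreover have "0 \<le> \<bar>f x\<bar> * \<bar>g x\<bar>" by simp
    ultimately have "\<bar>f x\<bar> * \<bar>g x\<bar> \<le> (f x)\<^sup>2 + (g x)\<^sup>2" by linarith
    then show ?thesis by (simp add: abs_mult)
  qed
  show i: "integrable M (\<lambda>x. f x * g x)"
  proof (rule Bochner_Integration.integrable_bound[OF Bochner_Integration.integrable_add[OF f2 g2]])
    show "(\<lambda>x. f x * g x) \<in> borel_measurable M" using fm gm by measurable
    show "AE x in M. norm (f x * g x) \<le> norm ((f x)\<^sup>2 + (g x)\<^sup>2)"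
      by (rule AE_I2) (use pw in simp)
  qed
  have ia: "integrable M (\<lambda>x. \<bar>f x * g x\<bar>)" using i by simp
  have CS: "(\<integral>\<^sup>+x. ennreal \<bar>f x\<bar> * ennreal \<bar>g x\<bar> \<partial>M)\<^sup>2 \<le>
     (\<integral>\<^sup>+x. (ennreal \<bar>f x\<bar>) ^ 2 \<partial>M) * (\<integral>\<^sup>+x. (ennreal \<bar>g x\<bar>) ^ 2 \<partial>M)"
    using fm gm by (intro Cauchy_Schwarz_nn_integral; measurable)
  have e1: "(\<integral>\<^sup>+x. ennreal \<bar>f x\<bar> * ennreal \<bar>g x\<bar> \<partial>M) = ennreal (\<integral>x. \<bar>f x * g x\<bar> \<partial>M)"
    by (subst nn_integral_eq_integral[OF ia, symmetric]) (auto simp: ennreal_mult[symmetric] abs_mult)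
  have e2: "(\<integral>\<^sup>+x. (ennreal \<bar>f x\<bar>) ^ 2 \<partial>M) = ennreal (\<integral>x. (f x)\<^sup>2 \<partial>M)"
    by (subst nn_integral_eq_integral[OF f2, symmetric]) (auto intro!: nn_integral_cong simp: ennreal_power)
  have e3: "(\<integral>\<^sup>+x. (ennreal \<bar>g x\<bar>) ^ 2 \<partial>M) = ennreal (\<integral>x. (g x)\<^sup>2 \<partial>M)"
    by (subst nn_integral_eq_integral[OF g2, symmetric]) (auto intro!: nn_integral_cong simp: ennreal_power)
  have "ennreal ((\<integral>x. \<bar>f x * g x\<bar> \<partial>M)\<^sup>2) \<le> ennreal ((\<integral>x. (f x)\<^sup>2 \<partial>M) * (\<integral>x. (g x)\<^sup>2 \<partial>M))"
    using CS unfolding e1 e2 e3 by (simp add: ennreal_power ennreal_mult[symmetric])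
  then have A: "(\<integral>x. \<bar>f x * g x\<bar> \<partial>M)\<^sup>2 \<le> (\<integral>x. (f x)\<^sup>2 \<partial>M) * (\<integral>x. (g x)\<^sup>2 \<partial>M)"
    by (subst (asm) ennreal_le_iff) auto
  have "\<bar>\<integral>x. f x * g x \<partial>M\<bar> \<le> (\<integral>x. \<bar>f x * g x\<bar> \<partial>M)" by (rule Bochner_Integration.integral_abs_bound)
  then have "(\<integral>x. f x * g x \<partial>M)\<^sup>2 \<le> (\<integral>x. \<bar>f x * g x\<bar> \<partial>M)\<^sup>2"
    by (metis abs_ge_zero power2_abs power_mono)
  with A show "(\<integral>x. f x * g x \<partial>M)\<^sup>2 \<le> (\<integral>x. (f x)\<^sup>2 \<partial>M) * (\<integral>x. (g x)\<^sup>2 \<partial>M)" by linarith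
qed

lemma scale_density:
  assumes "0 \<le> r"
  shows "scale_measure (ennreal r) N = density N (\<lambda>_. ennreal r)"
  by (rule measure_eqI) (auto simp: emeasure_density_const)

locale restr =
  fixes M :: "'a measure" and A :: "'a set"
  assumes P: "prob_space M" and A: "A \<in> sets M" and pos: "measure M A > 0"
begin

abbreviation "R \<equiv> restr_prob M A"

lemma R_eq: "R = density (restrict_space M A) (\<lambda>_. ennreal (1 / measure M A))"
  unfolding restr_prob_def using pos by (intro scale_density) simp

lemma sets_R: "sets R = sets (restrict_space M A)"
  unfolding restr_prob_def by simp

lemma space_R: "space R = A"
  unfolding restr_prob_def using A by (simp add: space_scale_measure)

lemma meas_R: "F \<in> borel_measurable M \<Longrightarrow> F \<in> borel_measurable R"
  unfolding R_eq by (simp add: measurable_restrict_space1)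

lemma AI: "A \<inter> space M \<in> sets M" using A by simp

lemma prob_R: "prob_space R"
proof (rule prob_spaceI)
  interpret prob_space M by (rule P)
  have "emeasure R (space R) = ennreal (1 / measure M A) * emeasure (restrict_space M A) A"
    unfolding space_R unfolding R_eq using A by (simp add: emeasure_density_const sets_restrict_space_iff)
  also have "emeasure (restrict_space M A) A = emeasure M A" by (rule emeasure_restrict_space[OF AI]) simp
  also have "\<dots> = ennreal (measure M A)" by (simp add: emeasure_eq_measure)
  finally show "emeasure R (space R) = 1" using pos by (simp add: ennreal_mult[symmetric])
qed

lemma int_R:
  fixes F :: "'a \<Rightarrow> real"
  assumes "F \<in> borel_measurable M"
  shows "(\<integral>x. F x \<partial>R) = (1 / measure M A) * (\<integral>x. indicator A x * F x \<partial>M)"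
proof -
  have "(\<integral>x. F x \<partial>R) = (\<integral>x. (1 / measure M A) * F x \<partial>restrict_space M A)"
    unfolding R_eq using pos assms
    by (subst integral_density) (auto intro!: measurable_restrict_space1)
  also have "\<dots> = (1 / measure M A) * (\<integral>x. F x \<partial>restrict_space M A)" by simp
  also have "(\<integral>x. F x \<partial>restrict_space M A) = (\<integral>x. indicator A x * F x \<partial>M)"
    by (subst integral_restrict_space[OF AI]) simp
  finally show ?thesis .
qed

lemma integrable_R:
  fixes F :: "'a \<Rightarrow> real"
  assumes "integrable M F"
  shows "integrable R F"
proof -
  have m: "F \<in> borel_measurable M" using assms by simp
  have "integrable (restrict_space M A) F"
    by (subst integrable_restrict_space[OF AI]) (use integrable_mult_indicator[OF A assms] in simp)
  then show ?thesis unfolding R_eq using pos m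
    by (subst integrable_density) (auto intro!: measurable_restrict_space1)
qed

lemma AE_R: "AE x in M. Q x \<Longrightarrow> AE x in R. Q x"
  unfolding R_eq
  by (subst AE_density) (auto simp: AE_restrict_space_iff[OF AI] elim: AE_mp)

end

lemma dom_nn:
  fixes \<phi> :: "'a \<Rightarrow> ennreal"
  assumes A: "A \<in> sets \<mu>" and sn: "sets \<nu> = sets (restrict_space \<mu> A)"
    and le: "\<And>B. B \<in> sets \<nu> \<Longrightarrow> c * emeasure \<nu> B \<le> emeasure \<mu> B"
    and m: "\<phi> \<in> borel_measurable \<mu>"
  shows "c * (\<integral>\<^sup>+x. \<phi> x \<partial>\<nu>) \<le> (\<integral>\<^sup>+x. \<phi> x \<partial>\<mu>)"
proof -
  have AI: "A \<inter> space \<mu> \<in> sets \<mu>" using A by simp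
  have mn: "\<phi> \<in> borel_measurable \<nu>"
    using measurable_restrict_space1[OF m] measurable_cong_sets[OF sn refl] by blast
  have "c * (\<integral>\<^sup>+x. \<phi> x \<partial>\<nu>) = (\<integral>\<^sup>+x. \<phi> x \<partial>scale_measure c \<nu>)"
    by (rule nn_integral_scale_measure[OF mn, symmetric])
  also have "\<dots> \<le> (\<integral>\<^sup>+x. \<phi> x \<partial>restrict_space \<mu> A)"
  proof (rule nn_integral_mono_measure)
    show ss: "sets (scale_measure c \<nu>) = sets (restrict_space \<mu> A)" using sn by simp
    show "scale_measure c \<nu> \<le> restrict_space \<mu> A"
      unfolding le_measure_iff
    proof -
      have sp: "space (scale_measure c \<nu>) = space (restrict_space \<mu> A)"
        using sets_eq_imp_space_eq[OF ss] .
      have "emeasure (scale_measure c \<nu>) \<le> emeasure (restrict_space \<mu> A)"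
      proof (rule le_funI)
        fix B
        show "emeasure (scale_measure c \<nu>) B \<le> emeasure (restrict_space \<mu> A) B"
        proof (cases "B \<in> sets \<nu>")
          case True
          then have "B \<subseteq> A" using sn sets.sets_into_space[of B "restrict_space \<mu> A"] by (auto simp: space_restrict_space)
          then have "emeasure (restrict_space \<mu> A) B = emeasure \<mu> B" by (rule emeasure_restrict_space[OF AI])
          then show ?thesis using le[OF True] by simp
        next
          case False
          then have "B \<notin> sets (restrict_space \<mu> A)" using sn by simp
          then show ?thesis using False by (simp add: emeasure_notin_sets)
        qed
      qed
      then show "if space (scale_measure c \<nu>) = space (restrict_space \<mu> A)
        then if sets (scale_measure c \<nu>) = sets (restrict_space \<mu> A)
        then emeasure (scale_measure c \<nu>) \<le> emeasure (restrict_space \<mu> A)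
        else sets (scale_measure c \<nu>) \<subseteq> sets (restrict_space \<mu> A)
        else space (scale_measure c \<nu>) \<subseteq> space (restrict_space \<mu> A)"
        using sp ss by simp
    qed
  qed
  also have "\<dots> = (\<integral>\<^sup>+x. \<phi> x * indicator A x \<partial>\<mu>)" by (rule nn_integral_restrict_space[OF AI])
  also have "\<dots> \<le> (\<integral>\<^sup>+x. \<phi> x \<partial>\<mu>)"
    by (rule nn_integral_mono) (simp add: indicator_def)
  finally show ?thesis .
qed

lemma sq_expand:
  fixes h :: "'a \<Rightarrow> real"
  assumes "prob_space N" "integrable N h" "integrable N (\<lambda>x. (h x)\<^sup>2)"
  shows "integrable N (\<lambda>x. (h x - a)\<^sup>2)"
    "(\<integral>x. (h x - a)\<^sup>2 \<partial>N) = (\<integral>x. (h x)\<^sup>2 \<partial>N) - 2 * a * (\<integral>x. h x \<partial>N) + a\<^sup>2"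
proof -
  interpret prob_space N by fact
  have e: "(\<lambda>x. (h x - a)\<^sup>2) = (\<lambda>x. ((h x)\<^sup>2 - 2 * a * h x) + a\<^sup>2)"
    by (simp add: power2_diff algebra_simps)
  have i1: "integrable N (\<lambda>x. (h x)\<^sup>2 - 2 * a * h x)"
    using assms by (intro Bochner_Integration.integrable_diff) auto
  show "integrable N (\<lambda>x. (h x - a)\<^sup>2)" unfolding e
    using i1 by (intro Bochner_Integration.integrable_add) auto
  have "(\<integral>x. (h x - a)\<^sup>2 \<partial>N) = (\<integral>x. (h x)\<^sup>2 - 2 * a * h x \<partial>N) + a\<^sup>2"
    unfolding e using i1 by (subst Bochner_Integration.integral_add) (auto simp: prob_space)
  also have "(\<integral>x. (h x)\<^sup>2 - 2 * a * h x \<partial>N) = (\<integral>x. (h x)\<^sup>2 \<partial>N) - 2 * a * (\<integral>x. h x \<partial>N)"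
    using assms by (subst Bochner_Integration.integral_diff) auto
  finally show "(\<integral>x. (h x - a)\<^sup>2 \<partial>N) = (\<integral>x. (h x)\<^sup>2 \<partial>N) - 2 * a * (\<integral>x. h x \<partial>N) + a\<^sup>2" .
qed

lemma dom_ineq:
  fixes h :: "'a \<Rightarrow> real"
  assumes A: "A \<in> sets \<mu>" and P\<mu>: "prob_space \<mu>" and P\<nu>: "prob_space \<nu>"
    and sn: "sets \<nu> = sets (restrict_space \<mu> A)" and c: "0 \<le> c"
    and le: "\<And>B. B \<in> sets \<nu> \<Longrightarrow> c * measure \<nu> B \<le> measure \<mu> B"
    and hm: "h \<in> borel_measurable \<mu>"
    and i\<mu>: "integrable \<mu> (\<lambda>x. (h x)\<^sup>2)" and i\<nu>: "integrable \<nu> (\<lambda>x. (h x)\<^sup>2)"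
  shows "(\<integral>x. h x \<partial>\<mu>)\<^sup>2 \<le> c * (\<integral>x. h x \<partial>\<nu>)\<^sup>2 + (\<integral>x. (h x)\<^sup>2 \<partial>\<mu>) - c * (\<integral>x. (h x)\<^sup>2 \<partial>\<nu>)"
proof -
  have hn: "h \<in> borel_measurable \<nu>"
    using measurable_restrict_space1[OF hm] measurable_cong_sets[OF sn refl] by blast
  have h\<mu>: "integrable \<mu> h" using finite_measure.square_integrable_imp_integrable[OF prob_space.finite_measure[OF P\<mu>] hm i\<mu>] .
  have h\<nu>: "integrable \<nu> h" using finite_measure.square_integrable_imp_integrable[OF prob_space.finite_measure[OF P\<nu>] hn i\<nu>] .
  define a where "a = (\<integral>x. h x \<partial>\<mu>)"
  define b where "b = (\<integral>x. h x \<partial>\<nu>)"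
  note E\<mu> = sq_expand[OF P\<mu> h\<mu> i\<mu>, of a]
  note E\<nu> = sq_expand[OF P\<nu> h\<nu> i\<nu>, of a]
  have "ennreal c * (\<integral>\<^sup>+x. ennreal ((h x - a)\<^sup>2) \<partial>\<nu>) \<le> (\<integral>\<^sup>+x. ennreal ((h x - a)\<^sup>2) \<partial>\<mu>)"
  proof (rule dom_nn[OF A sn])
    fix B assume B: "B \<in> sets \<nu>"
    have "ennreal c * emeasure \<nu> B = ennreal (c * measure \<nu> B)"
      using c by (simp add: finite_measure.emeasure_eq_measure[OF prob_space.finite_measure[OF P\<nu>]] ennreal_mult)
    also have "\<dots> \<le> ennreal (measure \<mu> B)" using le[OF B] by simp
    also have "\<dots> = emeasure \<mu> B" by (simp add: finite_measure.emeasure_eq_measure[OF prob_space.finite_measure[OF P\<mu>]])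
    finally show "ennreal c * emeasure \<nu> B \<le> emeasure \<mu> B" .
  next
    show "(\<lambda>x. ennreal ((h x - a)\<^sup>2)) \<in> borel_measurable \<mu>" using hm by measurable
  qed
  then have "ennreal (c * (\<integral>x. (h x - a)\<^sup>2 \<partial>\<nu>)) \<le> ennreal (\<integral>x. (h x - a)\<^sup>2 \<partial>\<mu>)"
    using c by (simp add: nn_integral_eq_integral[OF E\<nu>(1)] nn_integral_eq_integral[OF E\<mu>(1)] ennreal_mult)
  then have "c * (\<integral>x. (h x - a)\<^sup>2 \<partial>\<nu>) \<le> (\<integral>x. (h x - a)\<^sup>2 \<partial>\<mu>)"
    by (subst (asm) ennreal_le_iff) (auto intro!: integral_nonneg_AE)
  then have key: "c * ((\<integral>x. (h x)\<^sup>2 \<partial>\<nu>) - 2 * a * b + a\<^sup>2) \<le> (\<integral>x. (h x)\<^sup>2 \<partial>\<mu>) - 2 * a * a + a\<^sup>2"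
    unfolding E\<mu>(2) E\<nu>(2) a_def[symmetric] b_def[symmetric] by simp
  have "c * (- b\<^sup>2) \<le> c * (- 2 * a * b + a\<^sup>2)"
  proof (rule mult_left_mono[OF _ c])
    have "0 \<le> (a - b)\<^sup>2" by simp
    then show "- b\<^sup>2 \<le> - 2 * a * b + a\<^sup>2" by (simp add: power2_diff)
  qed
  with key show ?thesis unfolding a_def[symmetric] b_def[symmetric]
    by (simp add: algebra_simps power2_eq_square)
qed

lemma part_fun:
  assumes "disjoint_family Y" "y \<in> Y k0"
  shows "(\<lambda>k. indicator (Y k) y * (c::real)) = (\<lambda>k. indicator {k0} k * c)"
proof
  fix k show "indicator (Y k) y * c = indicator {k0} k * c"
    using assms unfolding disjoint_family_on_def by (cases "k = k0") (auto simp: indicator_def)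
qed

lemma count_single:
  fixes c :: real
  shows "integrable (count_space UNIV) (\<lambda>k. indicator {k0} k * c)"
    "(\<integral>k. indicator {k0} k * c \<partial>count_space UNIV) = c"
proof -
  have "integrable (count_space UNIV) (\<lambda>k. indicator {k0} k *\<^sub>R c)"
    by (rule integrable_indicator) auto
  then show "integrable (count_space UNIV) (\<lambda>k. indicator {k0} k * c)" by simp
  show "(\<integral>k. indicator {k0} k * c \<partial>count_space UNIV) = c"
    by (simp add: measure_count_space)
qed

lemma part_int:
  fixes Y :: "'k::countable \<Rightarrow> 'a set" and F :: "'a \<Rightarrow> real"
  assumes sf: "sigma_finite_measure N" and Ys: "\<And>k. Y k \<in> sets N" and dj: "disjoint_family Y"
    and cov: "(\<Union>k. Y k) = space N" and iF: "integrable N F"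
  shows "integrable (count_space UNIV) (\<lambda>k. \<integral>y. indicator (Y k) y * F y \<partial>N)"
    "(\<integral>y. F y \<partial>N) = (\<integral>k. (\<integral>y. indicator (Y k) y * F y \<partial>N) \<partial>count_space UNIV)"
proof -
  interpret sf: sigma_finite_measure N by (rule sf)
  interpret C: sigma_finite_measure "count_space (UNIV :: 'k set)" by (rule sigma_finite_measure_count_space)
  interpret pair_sigma_finite N "count_space (UNIV :: 'k set)" ..
  have Fm[measurable]: "F \<in> borel_measurable N" using iF by simp
  have pt: "(\<lambda>k. indicator (Y k) y * c) = (\<lambda>k. indicator {k0} k * (c::real))" if "y \<in> Y k0" for y k0 c
    by (rule part_fun[OF dj that])
  have ex: "\<exists>k0. y \<in> Y k0" if "y \<in> space N" for y using cov that by auto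
  have Hm: "(\<lambda>(y, k). indicator (Y k) y * F y) \<in> borel_measurable (N \<Otimes>\<^sub>M count_space UNIV)"
  proof -
    have "(\<lambda>(k, y). indicator (Y k) y * F y) \<in> borel_measurable (count_space UNIV \<Otimes>\<^sub>M N)"
      by (rule measurable_pair_measure_countable1) (auto intro!: borel_measurable_times borel_measurable_indicator Ys)
    then show ?thesis by (subst measurable_pair_swap_iff) (simp add: case_prod_beta)
  qed
  have inner: "integrable (count_space UNIV) (\<lambda>k. indicator (Y k) y * c) \<and>
      (\<integral>k. indicator (Y k) y * c \<partial>count_space UNIV) = c" if "y \<in> space N" for y and c :: real
    using ex[OF that] count_single pt by metis
  have HI: "integrable (N \<Otimes>\<^sub>M count_space UNIV) (\<lambda>(y, k). indicator (Y k) y * F y)"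
  proof (rule Fubini_integrable[OF Hm])
    show "integrable N (\<lambda>y. \<integral>k. norm (case (y, k) of (y, k) \<Rightarrow> indicator (Y k) y * F y) \<partial>count_space UNIV)"
    proof -
      have eq: "(\<integral>k. norm (indicator (Y k) y * F y) \<partial>count_space UNIV) = norm (F y)" if "y \<in> space N" for y
        using inner[OF that, of "norm (F y)"] by (simp add: abs_mult)
      have "integrable N (\<lambda>y. \<integral>k. norm (indicator (Y k) y * F y) \<partial>count_space UNIV) = integrable N (\<lambda>y. norm (F y))"
        by (rule Bochner_Integration.integrable_cong[OF refl eq])
      then show ?thesis using iF by simp
    qed
    show "AE y in N. integrable (count_space UNIV) (\<lambda>k. case (y, k) of (y, k) \<Rightarrow> indicator (Y k) y * F y)"
      using inner by (auto intro!: AE_I2)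
  qed
  show "integrable (count_space UNIV) (\<lambda>k. \<integral>y. indicator (Y k) y * F y \<partial>N)"
    using integrable_snd[of "\<lambda>y k. indicator (Y k) y * F y", OF HI] by simp
  have "(\<integral>k. (\<integral>y. indicator (Y k) y * F y \<partial>N) \<partial>count_space UNIV) =
      (\<integral>y. (\<integral>k. indicator (Y k) y * F y \<partial>count_space UNIV) \<partial>N)"
    using integral_snd[of "\<lambda>y k. indicator (Y k) y * F y", OF HI]
      integral_fst[of "\<lambda>y k. indicator (Y k) y * F y", OF HI] by simp
  also have "\<dots> = (\<integral>y. F y \<partial>N)"
    by (intro Bochner_Integration.integral_cong refl) (use inner in auto)
  finally show "(\<integral>y. F y \<partial>N) = (\<integral>k. (\<integral>y. indicator (Y k) y * F y \<partial>N) \<partial>count_space UNIV)" ..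
qed

lemma kmeasure_meas:
  assumes "markov_kernel M K" "B \<in> sets M"
  shows "(\<lambda>y. measure (K y) B) \<in> borel_measurable M"
proof -
  have "(\<lambda>N. emeasure N B) \<in> borel_measurable (subprob_algebra M)"
    using assms(2) by (rule measurable_emeasure_subprob_algebra)
  from measurable_compose[OF mk_sub[OF assms(1)] this]
  have "(\<lambda>y. emeasure (K y) B) \<in> borel_measurable M" by (simp add: o_def)
  then show ?thesis unfolding measure_def by (rule borel_measurable_enn2real)
qed

locale main =
  fixes \<omega> :: "'a measure"
    and Y :: "'k::countable \<Rightarrow> 'a set"
    and T S :: "'a \<Rightarrow> 'a measure"
    and Sstar :: "('a \<Rightarrow> real) \<Rightarrow> ('a \<Rightarrow> real)"
    and Tk :: "'k \<Rightarrow> 'a \<Rightarrow> 'a measure"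
    and c :: real
  assumes P: "prob_space \<omega>"
    and Ys: "\<And>k. Y k \<in> sets \<omega>"
    and dj: "disjoint_family Y"
    and cov: "(\<Union>k. Y k) = space \<omega>"
    and wpos: "\<And>k. measure \<omega> (Y k) > 0"
    and mT: "markov_kernel \<omega> T" and iT: "invariant \<omega> T"
    and mS: "markov_kernel \<omega> S" and iS: "invariant \<omega> S"
    and adj: "is_adjoint \<omega> S Sstar"
    and mTk: "\<And>k. markov_kernel (restr_prob \<omega> (Y k)) (Tk k)"
    and iTk: "\<And>k. invariant (restr_prob \<omega> (Y k)) (Tk k)"
    and c0: "0 \<le> c" and c1: "c \<le> 1"
    and dom: "\<And>k y B. y \<in> Y k \<Longrightarrow> B \<in> sets (restr_prob \<omega> (Y k)) \<Longrightarrow>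
           measure (T y) B \<ge> c * measure (Tk k y) B"
begin

abbreviation "w k \<equiv> measure \<omega> (Y k)"

lemma R: "restr \<omega> (Y k)"
  unfolding restr_def using P Ys wpos by blast

definition idx :: "'a \<Rightarrow> 'k" where "idx y = (SOME k. y \<in> Y k)"

lemma idx_in: "y \<in> space \<omega> \<Longrightarrow> y \<in> Y (idx y)"
proof -
  assume "y \<in> space \<omega>"
  then obtain k where "y \<in> Y k" using cov by blast
  then show ?thesis unfolding idx_def by (rule someI)
qed

lemma idx_eq: "y \<in> Y k \<Longrightarrow> idx y = k"
proof -
  assume y: "y \<in> Y k"
  then have "y \<in> space \<omega>" using cov by blast
  then have "y \<in> Y (idx y)" by (rule idx_in)
  with y dj show ?thesis unfolding disjoint_family_on_def by (metis IntI empty_iff iso_tuple_UNIV_I)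
qed


lemma Y_sub: "Y k \<subseteq> space \<omega>" using cov by auto

lemma idx_pre: "idx -` A \<inter> space \<omega> = (\<Union>k\<in>A. Y k)"
proof (intro set_eqI iffI)
  fix y assume "y \<in> idx -` A \<inter> space \<omega>"
  then show "y \<in> (\<Union>k\<in>A. Y k)" using idx_in by blast
next
  fix y assume "y \<in> (\<Union>k\<in>A. Y k)"
  then obtain k where k: "k \<in> A" "y \<in> Y k" by blast
  then show "y \<in> idx -` A \<inter> space \<omega>" using idx_eq[OF k(2)] Y_sub by blast
qed

lemma idx_meas[measurable]: "idx \<in> \<omega> \<rightarrow>\<^sub>M count_space UNIV"
proof -
  have "idx -` {a} \<inter> space \<omega> = Y a" for a using idx_pre[of "{a}"] by simp
  then show ?thesis by (subst measurable_count_space_eq2_countable) (auto simp: Ys)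
qed

lemma comp_meas: "(\<lambda>y. (\<phi> :: 'k \<Rightarrow> real) (idx y)) \<in> borel_measurable \<omega>"
  by measurable

lemma bar_distr: "bar_measure \<omega> Y = distr \<omega> (count_space UNIV) idx"
proof (rule measure_eqI)
  show "sets (bar_measure \<omega> Y) = sets (distr \<omega> (count_space UNIV) idx)"
    unfolding bar_measure_def by simp
  fix A assume "A \<in> sets (bar_measure \<omega> Y)"
  have "emeasure (bar_measure \<omega> Y) A = (\<integral>\<^sup>+k. ennreal (w k) * indicator A k \<partial>count_space UNIV)"
    unfolding bar_measure_def by (subst emeasure_density) auto
  also have "\<dots> = (\<integral>\<^sup>+k. emeasure \<omega> (Y k) \<partial>count_space A)"
  proof (cases "A = UNIV")
    case True then show ?thesis
      using finite_measure.emeasure_eq_measure[OF prob_space.finite_measure[OF P]] by simp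
  next
    case False
    then have "(\<integral>\<^sup>+k. emeasure \<omega> (Y k) \<partial>count_space A) = (\<integral>\<^sup>+k. emeasure \<omega> (Y k) * indicator A k \<partial>count_space UNIV)"
      by (subst nn_integral_count_space_indicator) auto
    then show ?thesis
      using finite_measure.emeasure_eq_measure[OF prob_space.finite_measure[OF P]] by simp
  qed
  also have "\<dots> = emeasure \<omega> (\<Union>k\<in>A. Y k)"
    by (rule emeasure_UN_countable[symmetric]) (auto simp: Ys intro: disjoint_family_on_mono[OF _ dj])
  also have "\<dots> = emeasure (distr \<omega> (count_space UNIV) idx) A"
    by (subst emeasure_distr) (auto simp: idx_pre)
  finally show "emeasure (bar_measure \<omega> Y) A = emeasure (distr \<omega> (count_space UNIV) idx) A" .
qed

lemma bar_prob: "prob_space (bar_measure \<omega> Y)"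
  unfolding bar_distr by (rule prob_space.prob_space_distr[OF P idx_meas])

lemma bar_sets: "sets (bar_measure \<omega> Y) = sets (count_space UNIV)"
  unfolding bar_measure_def by simp

lemma bar_space: "space (bar_measure \<omega> Y) = UNIV"
  unfolding bar_measure_def by simp

lemma bar_meas: "(\<phi> :: 'k \<Rightarrow> real) \<in> borel_measurable (bar_measure \<omega> Y)"
  by (subst measurable_cong_sets[OF bar_sets refl]) simp

lemma bar_int: "integrable (bar_measure \<omega> Y) \<phi> \<longleftrightarrow> integrable \<omega> (\<lambda>y. (\<phi> :: 'k \<Rightarrow> real) (idx y))"
  unfolding bar_distr by (rule integrable_distr_eq) auto

lemma bar_integral: "(\<integral>k. \<phi> k \<partial>bar_measure \<omega> Y) = (\<integral>y. (\<phi> :: 'k \<Rightarrow> real) (idx y) \<partial>\<omega>)"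
  unfolding bar_distr by (rule integral_distr) auto

lemma bar_int_dens: "integrable (bar_measure \<omega> Y) \<phi> \<longleftrightarrow> integrable (count_space UNIV) (\<lambda>k. w k * (\<phi> :: 'k \<Rightarrow> real) k)"
  unfolding bar_measure_def by (subst integrable_density) auto

lemma bar_integral_dens: "(\<integral>k. \<phi> k \<partial>bar_measure \<omega> Y) = (\<integral>k. w k * (\<phi> :: 'k \<Rightarrow> real) k \<partial>count_space UNIV)"
  unfolding bar_measure_def by (subst integral_density) auto

end

context main begin

lemma Sy: "y \<in> space \<omega> \<Longrightarrow> prob_space (S y)" "y \<in> space \<omega> \<Longrightarrow> sets (S y) = sets \<omega>"
  using mk_space[OF mS] by auto

lemma sY_meas: "(\<lambda>y. measure (S y) (Y k)) \<in> borel_measurable \<omega>"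
  by (rule kmeasure_meas[OF mS Ys])

lemma sY_bnd: "y \<in> space \<omega> \<Longrightarrow> 0 \<le> measure (S y) B \<and> measure (S y) B \<le> 1"
  using prob_space.prob_le_1[OF Sy(1)] by auto

lemma Ga:
  fixes \<phi> :: "'k \<Rightarrow> real"
  assumes y: "y \<in> space \<omega>" and i: "integrable (S y) (\<lambda>x. \<phi> (idx x))"
  shows "integrable (count_space UNIV) (\<lambda>k. \<phi> k * measure (S y) (Y k))"
    "kop S (\<lambda>x. \<phi> (idx x)) y = (\<integral>k. \<phi> k * measure (S y) (Y k) \<partial>count_space UNIV)"
proof -
  have sf: "sigma_finite_measure (S y)" using Sy(1)[OF y] by (rule prob_space_imp_sigma_finite)
  have se: "sets (S y) = sets \<omega>" by (rule Sy(2)[OF y])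
  have sp: "space (S y) = space \<omega>" using sets_eq_imp_space_eq[OF se] .
  have Ys': "Y k \<in> sets (S y)" for k using Ys se by simp
  have cov': "(\<Union>k. Y k) = space (S y)" using cov sp by simp
  note PI = part_int[OF sf Ys' dj cov' i]
  have pt: "(\<integral>x. indicator (Y k) x * \<phi> (idx x) \<partial>S y) = \<phi> k * measure (S y) (Y k)" for k
  proof -
    have "(\<integral>x. indicator (Y k) x * \<phi> (idx x) \<partial>S y) = (\<integral>x. \<phi> k * indicator (Y k) x \<partial>S y)"
      by (rule Bochner_Integration.integral_cong[OF refl]) (auto simp: indicator_def idx_eq)
    also have "\<dots> = \<phi> k * measure (S y) (Y k)"
      using Ys' by (simp add: Int_absorb2 sets.sets_into_space)
    finally show ?thesis .
  qed
  show "integrable (count_space UNIV) (\<lambda>k. \<phi> k * measure (S y) (Y k))"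
    using PI(1) unfolding pt .
  show "kop S (\<lambda>x. \<phi> (idx x)) y = (\<integral>k. \<phi> k * measure (S y) (Y k) \<partial>count_space UNIV)"
    unfolding kop_def using PI(2) unfolding pt .
qed

lemma GF:
  fixes \<phi> :: "'k \<Rightarrow> real" and F :: "'a \<Rightarrow> real"
  assumes Fm: "F \<in> borel_measurable \<omega>"
    and ae1: "AE y in \<omega>. integrable (S y) (\<lambda>x. \<phi> (idx x))"
    and ae2: "AE y in \<omega>. integrable (S y) (\<lambda>x. \<bar>\<phi> (idx x)\<bar>)"
    and intb: "integrable \<omega> (\<lambda>y. \<bar>F y\<bar> * kop S (\<lambda>x. \<bar>\<phi> (idx x)\<bar>) y)"
  shows "integrable (count_space UNIV) (\<lambda>k. \<phi> k * (\<integral>y. F y * measure (S y) (Y k) \<partial>\<omega>))"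
    "(\<integral>k. \<phi> k * (\<integral>y. F y * measure (S y) (Y k) \<partial>\<omega>) \<partial>count_space UNIV) =
       (\<integral>y. F y * kop S (\<lambda>x. \<phi> (idx x)) y \<partial>\<omega>)"
proof -
  interpret sf: sigma_finite_measure \<omega> using P by (rule prob_space_imp_sigma_finite)
  interpret C: sigma_finite_measure "count_space (UNIV :: 'k set)" by (rule sigma_finite_measure_count_space)
  interpret pair_sigma_finite \<omega> "count_space (UNIV :: 'k set)" ..
  define G where "G = (\<lambda>(y, k). F y * (\<phi> k * measure (S y) (Y k)))"
  have Gm: "G \<in> borel_measurable (\<omega> \<Otimes>\<^sub>M count_space UNIV)"
  proof -
    have "(\<lambda>(k, y). F y * (\<phi> k * measure (S y) (Y k))) \<in> borel_measurable (count_space UNIV \<Otimes>\<^sub>M \<omega>)"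
    proof (rule measurable_pair_measure_countable1)
      fix k :: 'k
      show "(\<lambda>y. case (k, y) of (k, y) \<Rightarrow> F y * (\<phi> k * measure (S y) (Y k))) \<in> borel_measurable \<omega>"
        using Fm sY_meas[of k] by simp
    qed simp
    then show ?thesis unfolding G_def by (subst measurable_pair_swap_iff) (simp add: case_prod_beta)
  qed
  have inner_abs: "AE y in \<omega>. (\<integral>k. norm (G (y, k)) \<partial>count_space UNIV) = \<bar>F y\<bar> * kop S (\<lambda>x. \<bar>\<phi> (idx x)\<bar>) y"
    using ae2
  proof (rule AE_mp, intro AE_I2 impI)
    fix y assume y: "y \<in> space \<omega>" and i: "integrable (S y) (\<lambda>x. \<bar>\<phi> (idx x)\<bar>)"
    have "(\<integral>k. norm (G (y, k)) \<partial>count_space UNIV) = (\<integral>k. \<bar>F y\<bar> * (\<bar>\<phi> k\<bar> * measure (S y) (Y k)) \<partial>count_space UNIV)"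
      unfolding G_def using sY_bnd[OF y] by (intro Bochner_Integration.integral_cong) (auto simp: abs_mult)
    also have "\<dots> = \<bar>F y\<bar> * (\<integral>k. \<bar>\<phi> k\<bar> * measure (S y) (Y k) \<partial>count_space UNIV)" by simp
    also have "\<dots> = \<bar>F y\<bar> * kop S (\<lambda>x. \<bar>\<phi> (idx x)\<bar>) y"
      using Ga(2)[OF y, of "\<lambda>k. \<bar>\<phi> k\<bar>"] i by simp
    finally show "(\<integral>k. norm (G (y, k)) \<partial>count_space UNIV) = \<bar>F y\<bar> * kop S (\<lambda>x. \<bar>\<phi> (idx x)\<bar>) y" .
  qed
  have GI: "integrable (\<omega> \<Otimes>\<^sub>M count_space UNIV) G"
  proof (rule Fubini_integrable[OF Gm])
    have m1: "(\<lambda>y. \<integral>k. norm (G (y, k)) \<partial>count_space UNIV) \<in> borel_measurable \<omega>"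
      using Gm by measurable
    have m2: "(\<lambda>y. \<bar>F y\<bar> * kop S (\<lambda>x. \<bar>\<phi> (idx x)\<bar>) y) \<in> borel_measurable \<omega>"
      using intb by simp
    show "integrable \<omega> (\<lambda>y. \<integral>k. norm (G (y, k)) \<partial>count_space UNIV)"
      using intb by (subst integrable_cong_AE[OF m1 m2 inner_abs])
    show "AE y in \<omega>. integrable (count_space UNIV) (\<lambda>k. G (y, k))"
      using ae1 by (rule AE_mp) (auto intro!: AE_I2 simp: G_def intro: Ga(1))
  qed
  have inner: "AE y in \<omega>. (\<integral>k. G (y, k) \<partial>count_space UNIV) = F y * kop S (\<lambda>x. \<phi> (idx x)) y"
    using ae1 by (rule AE_mp) (auto intro!: AE_I2 simp: G_def Ga(2))
  have outer: "(\<integral>y. G (y, k) \<partial>\<omega>) = \<phi> k * (\<integral>y. F y * measure (S y) (Y k) \<partial>\<omega>)" for k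
  proof -
    have "(\<integral>y. G (y, k) \<partial>\<omega>) = (\<integral>y. \<phi> k * (F y * measure (S y) (Y k)) \<partial>\<omega>)"
      unfolding G_def by (simp add: ac_simps)
    then show ?thesis by simp
  qed
  show "integrable (count_space UNIV) (\<lambda>k. \<phi> k * (\<integral>y. F y * measure (S y) (Y k) \<partial>\<omega>))"
    using integrable_snd[of "\<lambda>y k. G (y, k)"] GI unfolding outer by simp
  have "(\<integral>k. \<phi> k * (\<integral>y. F y * measure (S y) (Y k) \<partial>\<omega>) \<partial>count_space UNIV) =
      (\<integral>k. (\<integral>y. G (y, k) \<partial>\<omega>) \<partial>count_space UNIV)" unfolding outer ..
  also have "\<dots> = (\<integral>y. (\<integral>k. G (y, k) \<partial>count_space UNIV) \<partial>\<omega>)"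
    using integral_snd[of "\<lambda>y k. G (y, k)"] integral_fst[of "\<lambda>y k. G (y, k)"] GI by simp
  also have "\<dots> = (\<integral>y. F y * kop S (\<lambda>x. \<phi> (idx x)) y \<partial>\<omega>)"
  proof (rule integral_cong_AE)
    show "(\<lambda>y. \<integral>k. G (y, k) \<partial>count_space UNIV) \<in> borel_measurable \<omega>" using Gm by measurable
    show "(\<lambda>y. F y * kop S (\<lambda>x. \<phi> (idx x)) y) \<in> borel_measurable \<omega>"
      using Fm kop_meas[OF mS comp_meas] by measurable
  qed (rule inner)
  finally show "(\<integral>k. \<phi> k * (\<integral>y. F y * measure (S y) (Y k) \<partial>\<omega>) \<partial>count_space UNIV) =
       (\<integral>y. F y * kop S (\<lambda>x. \<phi> (idx x)) y \<partial>\<omega>)" .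
qed

end

context main begin

lemma kop_one: "y \<in> space \<omega> \<Longrightarrow> kop S (\<lambda>x. 1) y = 1"
  unfolding kop_def using prob_space.prob_space[OF Sy(1)] by simp

lemma int_bnd:
  fixes F :: "'a \<Rightarrow> real"
  assumes "F \<in> borel_measurable \<omega>" "\<And>y. y \<in> space \<omega> \<Longrightarrow> \<bar>F y\<bar> \<le> B"
  shows "integrable \<omega> F"
  using assms by (intro finite_measure.integrable_const_bound[OF prob_space.finite_measure[OF P], where B=B])
    (auto intro!: AE_I2)

lemma kop_nonneg: "(\<And>x. 0 \<le> f x) \<Longrightarrow> 0 \<le> kop K f y"
  unfolding kop_def by (rule Bochner_Integration.integral_nonneg) auto

lemma wne: "w k \<noteq> 0" using wpos[of k] by linarith

lemma GF_bnd:
  fixes \<phi> :: "'k \<Rightarrow> real" and F :: "'a \<Rightarrow> real"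
  assumes Fm: "F \<in> borel_measurable \<omega>" and Fb: "\<And>y. y \<in> space \<omega> \<Longrightarrow> \<bar>F y\<bar> \<le> 1"
    and \<phi>b: "\<And>k. \<bar>\<phi> k\<bar> \<le> 1"
  shows "integrable (count_space UNIV) (\<lambda>k. \<phi> k * (\<integral>y. F y * measure (S y) (Y k) \<partial>\<omega>))"
    "(\<integral>k. \<phi> k * (\<integral>y. F y * measure (S y) (Y k) \<partial>\<omega>) \<partial>count_space UNIV) =
       (\<integral>y. F y * kop S (\<lambda>x. \<phi> (idx x)) y \<partial>\<omega>)"
proof -
  have i1: "integrable \<omega> (\<lambda>x. \<phi> (idx x))" by (rule int_bnd[OF comp_meas]) (use \<phi>b in auto)
  have i2: "integrable \<omega> (\<lambda>x. \<bar>\<phi> (idx x)\<bar>)" by (rule int_bnd[of _ 1]) (use \<phi>b comp_meas in auto)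
  note K1 = mk_int[OF P mS iS i1] and K2 = mk_int[OF P mS iS i2]
  have intb: "integrable \<omega> (\<lambda>y. \<bar>F y\<bar> * kop S (\<lambda>x. \<bar>\<phi> (idx x)\<bar>) y)"
  proof (rule Bochner_Integration.integrable_bound[OF K2(2)])
    show "(\<lambda>y. \<bar>F y\<bar> * kop S (\<lambda>x. \<bar>\<phi> (idx x)\<bar>) y) \<in> borel_measurable \<omega>"
      using Fm kop_meas[OF mS, of "\<lambda>x. \<bar>\<phi> (idx x)\<bar>"] i2 by measurable
    show "AE y in \<omega>. norm (\<bar>F y\<bar> * kop S (\<lambda>x. \<bar>\<phi> (idx x)\<bar>) y) \<le> norm (kop S (\<lambda>x. \<bar>\<phi> (idx x)\<bar>) y)"
    proof (rule AE_I2)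
      fix y assume y: "y \<in> space \<omega>"
      have "0 \<le> kop S (\<lambda>x. \<bar>\<phi> (idx x)\<bar>) y" by (rule kop_nonneg) simp
      then show "norm (\<bar>F y\<bar> * kop S (\<lambda>x. \<bar>\<phi> (idx x)\<bar>) y) \<le> norm (kop S (\<lambda>x. \<bar>\<phi> (idx x)\<bar>) y)"
        using Fb[OF y] by (simp add: abs_mult mult_left_le_one_le)
    qed
  qed
  note GF[OF Fm K1(1) K2(1) intb]
  then show "integrable (count_space UNIV) (\<lambda>k. \<phi> k * (\<integral>y. F y * measure (S y) (Y k) \<partial>\<omega>))"
    "(\<integral>k. \<phi> k * (\<integral>y. F y * measure (S y) (Y k) \<partial>\<omega>) \<partial>count_space UNIV) =
       (\<integral>y. F y * kop S (\<lambda>x. \<phi> (idx x)) y \<partial>\<omega>)" by auto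
qed

definition Q :: "'k \<Rightarrow> 'k \<Rightarrow> real" where
  "Q k k' = (\<integral>y. measure (S y) (Y k) * measure (S y) (Y k') \<partial>\<omega>)"

lemma bk_eq: "bar_kernel \<omega> Y S k = density (count_space UNIV) (\<lambda>k'. ennreal (1 / w k * Q k k'))"
  unfolding bar_kernel_def Q_def ..

lemma Q_nonneg: "0 \<le> Q k k'"
  unfolding Q_def by (rule integral_nonneg_AE) (auto intro!: AE_I2)

lemma sY_b: "y \<in> space \<omega> \<Longrightarrow> \<bar>measure (S y) B\<bar> \<le> 1"
  using sY_bnd by fastforce

lemma invS: "(\<integral>y. measure (S y) (Y k) \<partial>\<omega>) = w k"
  using iS Ys unfolding invariant_def by blast

lemma Qsum: "integrable (count_space UNIV) (Q k)" "(\<integral>k'. Q k k' \<partial>count_space UNIV) = w k"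
proof -
  note G = GF_bnd[OF sY_meas[of k] sY_b, of "\<lambda>_. 1"]
  show "integrable (count_space UNIV) (Q k)" using G(1) unfolding Q_def by simp
  have "(\<integral>k'. Q k k' \<partial>count_space UNIV) = (\<integral>y. measure (S y) (Y k) * kop S (\<lambda>x. 1) y \<partial>\<omega>)"
    using G(2) unfolding Q_def by simp
  also have "\<dots> = (\<integral>y. measure (S y) (Y k) \<partial>\<omega>)"
    by (rule Bochner_Integration.integral_cong) (auto simp: kop_one)
  finally show "(\<integral>k'. Q k k' \<partial>count_space UNIV) = w k" using invS by simp
qed

lemma ind_meas: "(\<lambda>x. indicator B (idx x) :: real) \<in> borel_measurable \<omega>"
  by (rule comp_meas)

lemma kop_ind: "y \<in> space \<omega> \<Longrightarrow> \<bar>kop S (\<lambda>x. indicator B (idx x)) y\<bar> \<le> 1"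
proof -
  assume y: "y \<in> space \<omega>"
  have "kop S (\<lambda>x. indicator B (idx x)) y = (\<integral>x. indicator (idx -` B) x \<partial>S y)"
    unfolding kop_def by (simp add: indicator_def)
  also have "\<dots> = measure (S y) (idx -` B \<inter> space (S y))" by simp
  finally show ?thesis using prob_space.prob_le_1[OF Sy(1)[OF y]] by simp
qed

lemma QB: "integrable (count_space UNIV) (\<lambda>k'. indicator B k' * Q k k')"
  "(\<integral>k'. indicator B k' * Q k k' \<partial>count_space UNIV) =
     (\<integral>y. measure (S y) (Y k) * kop S (\<lambda>x. indicator B (idx x)) y \<partial>\<omega>)"
proof -
  note G = GF_bnd[OF sY_meas[of k] sY_b, of "indicator B"]
  show "integrable (count_space UNIV) (\<lambda>k'. indicator B k' * Q k k')" using G(1) unfolding Q_def by simp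
  show "(\<integral>k'. indicator B k' * Q k k' \<partial>count_space UNIV) =
     (\<integral>y. measure (S y) (Y k) * kop S (\<lambda>x. indicator B (idx x)) y \<partial>\<omega>)"
    using G(2) unfolding Q_def by simp
qed

lemma bk_measure: "measure (bar_kernel \<omega> Y S k) B = 1 / w k * (\<integral>k'. indicator B k' * Q k k' \<partial>count_space UNIV)"
proof -
  have wp: "0 < w k" by (rule wpos)
  have i: "integrable (count_space UNIV) (\<lambda>k'. 1 / w k * Q k k' * indicator B k')"
    using QB(1)[of B k] by (simp add: ac_simps)
  have "emeasure (bar_kernel \<omega> Y S k) B = (\<integral>\<^sup>+k'. ennreal (1 / w k * Q k k') * indicator B k' \<partial>count_space UNIV)"
    unfolding bk_eq by (subst emeasure_density) auto
  also have "\<dots> = (\<integral>\<^sup>+k'. ennreal (1 / w k * Q k k' * indicator B k') \<partial>count_space UNIV)"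
    by (rule nn_integral_cong) (simp add: indicator_def)
  also have "\<dots> = ennreal (\<integral>k'. 1 / w k * Q k k' * indicator B k' \<partial>count_space UNIV)"
    by (rule nn_integral_eq_integral[OF i]) (use wp Q_nonneg in auto)
  finally have "measure (bar_kernel \<omega> Y S k) B = (\<integral>k'. 1 / w k * Q k k' * indicator B k' \<partial>count_space UNIV)"
    unfolding measure_def using wp Q_nonneg
    by (simp add: integral_nonneg_AE)
  also have "\<dots> = 1 / w k * (\<integral>k'. indicator B k' * Q k k' \<partial>count_space UNIV)"
    by (simp add: ac_simps)
  finally show ?thesis .
qed

lemma bk_prob: "prob_space (bar_kernel \<omega> Y S k)"
proof (rule prob_spaceI)
  have wp: "0 < w k" by (rule wpos)
  have i: "integrable (count_space UNIV) (\<lambda>k'. 1 / w k * Q k k')"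
    using Qsum(1)[of k] by simp
  have "emeasure (bar_kernel \<omega> Y S k) (space (bar_kernel \<omega> Y S k)) = (\<integral>\<^sup>+k'. ennreal (1 / w k * Q k k') \<partial>count_space UNIV)"
    unfolding bk_eq by (subst emeasure_density) auto
  also have "\<dots> = ennreal (\<integral>k'. 1 / w k * Q k k' \<partial>count_space UNIV)"
    by (rule nn_integral_eq_integral[OF i]) (use wp Q_nonneg in auto)
  also have "\<dots> = 1" using Qsum(2)[of k] wp by simp
  finally show "emeasure (bar_kernel \<omega> Y S k) (space (bar_kernel \<omega> Y S k)) = 1" .
qed

lemma bk_markov: "markov_kernel (bar_measure \<omega> Y) (bar_kernel \<omega> Y S)"
  unfolding markov_kernel_def
proof (subst measurable_cong_sets[OF bar_sets refl])
  show "bar_kernel \<omega> Y S \<in> count_space UNIV \<rightarrow>\<^sub>M prob_algebra (bar_measure \<omega> Y)"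
    using bk_prob by (auto simp: space_prob_algebra bk_eq bar_sets)
qed

lemma bk_inv: "invariant (bar_measure \<omega> Y) (bar_kernel \<omega> Y S)"
  unfolding invariant_def
proof
  fix B assume "B \<in> sets (bar_measure \<omega> Y)"
  define Kb where "Kb y = kop S (\<lambda>x. indicator B (idx x)) y" for y
  have Kbm: "Kb \<in> borel_measurable \<omega>" unfolding Kb_def by (rule kop_meas[OF mS ind_meas])
  have Kbb: "y \<in> space \<omega> \<Longrightarrow> \<bar>Kb y\<bar> \<le> 1" for y unfolding Kb_def by (rule kop_ind)
  have "(\<integral>k. measure (bar_kernel \<omega> Y S k) B \<partial>bar_measure \<omega> Y) =
      (\<integral>k. w k * (1 / w k * (\<integral>k'. indicator B k' * Q k k' \<partial>count_space UNIV)) \<partial>count_space UNIV)"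
    by (simp add: bar_integral_dens bk_measure)
  also have "\<dots> = (\<integral>k. (\<integral>y. measure (S y) (Y k) * Kb y \<partial>\<omega>) \<partial>count_space UNIV)"
    by (intro Bochner_Integration.integral_cong refl) (simp add: QB(2) Kb_def wne)
  also have "\<dots> = (\<integral>k. 1 * (\<integral>y. Kb y * measure (S y) (Y k) \<partial>\<omega>) \<partial>count_space UNIV)"
    by (simp add: ac_simps)
  also have "\<dots> = (\<integral>y. Kb y * kop S (\<lambda>x. 1) y \<partial>\<omega>)"
    using GF_bnd(2)[OF Kbm Kbb, of "\<lambda>_. 1"] by simp
  also have "\<dots> = (\<integral>y. Kb y \<partial>\<omega>)"
    by (rule Bochner_Integration.integral_cong) (auto simp: kop_one)
  also have "\<dots> = (\<integral>y. indicator B (idx y) \<partial>\<omega>)"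
    unfolding Kb_def by (rule mk_int(3)[OF P mS iS int_bnd[OF ind_meas]]) auto
  also have "\<dots> = (\<integral>k. indicator B k \<partial>bar_measure \<omega> Y)" by (rule bar_integral[symmetric])
  also have "\<dots> = measure (bar_measure \<omega> Y) B" by (simp add: bar_space)
  finally show "(\<integral>k. measure (bar_kernel \<omega> Y S k) B \<partial>bar_measure \<omega> Y) = measure (bar_measure \<omega> Y) B" .
qed

lemma bar_kop: "kop (bar_kernel \<omega> Y S) m k = 1 / w k * (\<integral>k'. m k' * Q k k' \<partial>count_space UNIV)"
proof -
  have "kop (bar_kernel \<omega> Y S) m k = (\<integral>k'. (1 / w k * Q k k') * m k' \<partial>count_space UNIV)"
    unfolding kop_def bk_eq using wpos Q_nonneg
    by (subst integral_density) (auto intro!: AE_I2 simp: less_imp_le)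
  also have "\<dots> = 1 / w k * (\<integral>k'. m k' * Q k k' \<partial>count_space UNIV)"
    by (simp add: ac_simps)
  finally show ?thesis .
qed

end

context main begin

abbreviation "opk k \<equiv> op_norm (restr_prob \<omega> (Y k)) (kop (Tk k))"
abbreviation "lam2 \<equiv> (SUP k. (opk k)\<^sup>2)"
abbreviation "sig \<equiv> op_norm (bar_measure \<omega> Y) (kop (bar_kernel \<omega> Y S))"

lemma opk: "0 \<le> opk k" "opk k \<le> 1"
  "\<And>f. f \<in> L2_0 (restr_prob \<omega> (Y k)) \<Longrightarrow> L2_norm (restr_prob \<omega> (Y k)) (kop (Tk k) f) \<le> opk k * L2_norm (restr_prob \<omega> (Y k)) f"
  using op_norm_kop[OF restr.prob_R[OF R] mTk iTk] by auto

lemma lam: "(opk k)\<^sup>2 \<le> lam2" "0 \<le> lam2" "lam2 \<le> 1"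
proof -
  have b: "(opk k)\<^sup>2 \<le> 1" for k using opk(1,2)[of k] by (simp add: power_le_one)
  have bdd: "bdd_above (range (\<lambda>k. (opk k)\<^sup>2))" by (rule bdd_aboveI[where M=1]) (use b in auto)
  show u: "(opk k)\<^sup>2 \<le> lam2" for k by (rule cSUP_upper[OF _ bdd]) simp
  show "0 \<le> lam2" by (rule order.trans[OF _ u]) simp
  show "lam2 \<le> 1" by (rule cSUP_least) (use b in auto)
qed

lemma sig: "0 \<le> sig" "sig \<le> 1"
  "\<And>f. f \<in> L2_0 (bar_measure \<omega> Y) \<Longrightarrow> L2_norm (bar_measure \<omega> Y) (kop (bar_kernel \<omega> Y S) f) \<le> sig * L2_norm (bar_measure \<omega> Y) f"
  using op_norm_kop[OF bar_prob bk_markov bk_inv] by auto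

lemma L2_0D: "f \<in> L2_0 M \<Longrightarrow> f \<in> borel_measurable M \<and> integrable M (\<lambda>x. (f x)\<^sup>2) \<and> (\<integral>x. f x \<partial>M) = 0"
  unfolding L2_0_def by auto

lemma adj_h: assumes g: "g \<in> L2_0 \<omega>"
  shows "Sstar g \<in> L2_0 \<omega>" "(\<integral>x. (Sstar g x)\<^sup>2 \<partial>\<omega>) \<le> (\<integral>x. (g x)\<^sup>2 \<partial>\<omega>)"
proof -
  show h: "Sstar g \<in> L2_0 \<omega>" using adj g unfolding is_adjoint_def by blast
  define h where "h = Sstar g"
  have hL: "h \<in> L2_0 \<omega>" using h unfolding h_def .
  note hD = L2_0D[OF hL] and gD = L2_0D[OF g]
  note SL = mk_L2[OF P mS iS conjunct1[OF hD] conjunct1[OF conjunct2[OF hD]]]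
  have e: "L2_inner \<omega> (kop S h) g = L2_inner \<omega> h h"
    using adj hL g unfolding is_adjoint_def h_def by blast
  have "(\<integral>x. kop S h x * g x \<partial>\<omega>)\<^sup>2 \<le> (\<integral>x. (kop S h x)\<^sup>2 \<partial>\<omega>) * (\<integral>x. (g x)\<^sup>2 \<partial>\<omega>)"
    by (rule cs_int(2)[OF kop_meas[OF mS] _ SL(1)]) (use hD gD in auto)
  also have "\<dots> \<le> (\<integral>x. (h x)\<^sup>2 \<partial>\<omega>) * (\<integral>x. (g x)\<^sup>2 \<partial>\<omega>)"
    by (rule mult_right_mono[OF SL(2)]) simp
  finally have a: "(\<integral>x. (h x)\<^sup>2 \<partial>\<omega>)\<^sup>2 \<le> (\<integral>x. (h x)\<^sup>2 \<partial>\<omega>) * (\<integral>x. (g x)\<^sup>2 \<partial>\<omega>)"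
    using e unfolding L2_inner_def by (simp add: power2_eq_square)
  have b: "0 \<le> (\<integral>x. (h x)\<^sup>2 \<partial>\<omega>)" by simp
  have "(\<integral>x. (h x)\<^sup>2 \<partial>\<omega>) \<le> (\<integral>x. (g x)\<^sup>2 \<partial>\<omega>)"
  proof (cases "(\<integral>x. (h x)\<^sup>2 \<partial>\<omega>) = 0")
    case True then show ?thesis by simp
  next
    case False
    then have p: "0 < (\<integral>x. (h x)\<^sup>2 \<partial>\<omega>)" using b by linarith
    from a have "(\<integral>x. (h x)\<^sup>2 \<partial>\<omega>) * (\<integral>x. (h x)\<^sup>2 \<partial>\<omega>) \<le> (\<integral>x. (h x)\<^sup>2 \<partial>\<omega>) * (\<integral>x. (g x)\<^sup>2 \<partial>\<omega>)"
      by (simp add: power2_eq_square)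
    then show ?thesis using p by simp
  qed
  then show "(\<integral>x. (Sstar g x)\<^sup>2 \<partial>\<omega>) \<le> (\<integral>x. (g x)\<^sup>2 \<partial>\<omega>)" unfolding h_def .
qed

end

context main begin

lemma block:
  assumes hL: "h \<in> L2_0 \<omega>"
  shows "integrable (restr_prob \<omega> (Y k)) (\<lambda>y. (kop T h y)\<^sup>2)"
    "integrable (restr_prob \<omega> (Y k)) (kop T (\<lambda>x. (h x)\<^sup>2))"
    "(\<integral>y. (kop T h y)\<^sup>2 \<partial>restr_prob \<omega> (Y k)) \<le> (\<integral>y. kop T (\<lambda>x. (h x)\<^sup>2) y \<partial>restr_prob \<omega> (Y k))
       - c * (1 - lam2) * ((\<integral>x. (h x)\<^sup>2 \<partial>restr_prob \<omega> (Y k)) - (\<integral>x. h x \<partial>restr_prob \<omega> (Y k))\<^sup>2)"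
proof -
  let ?N = "restr_prob \<omega> (Y k)"
  have RR: "restr \<omega> (Y k)" by (rule R)
  note hD = L2_0D[OF hL]
  have hm: "h \<in> borel_measurable \<omega>" and h2: "integrable \<omega> (\<lambda>x. (h x)\<^sup>2)" using hD by auto
  have PN: "prob_space ?N" by (rule restr.prob_R[OF RR])
  have hN: "h \<in> borel_measurable ?N" by (rule restr.meas_R[OF RR hm])
  have h2N: "integrable ?N (\<lambda>x. (h x)\<^sup>2)" by (rule restr.integrable_R[OF RR h2])
  have hiN: "integrable ?N h"
    by (rule finite_measure.square_integrable_imp_integrable[OF prob_space.finite_measure[OF PN] hN h2N])
  have spN: "space ?N = Y k" by (rule restr.space_R[OF RR])
  have setsN: "sets ?N = sets (restrict_space \<omega> (Y k))" by (rule restr.sets_R[OF RR])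
  note TI = mk_int[OF P mT iT h2]
  note TL = mk_L2[OF P mT iT hm h2]
  note KI = mk_int[OF PN mTk iTk h2N]
  note KL = mk_L2[OF PN mTk iTk hN h2N]
  show i1: "integrable ?N (\<lambda>y. (kop T h y)\<^sup>2)" by (rule restr.integrable_R[OF RR TL(1)])
  show i2: "integrable ?N (kop T (\<lambda>x. (h x)\<^sup>2))" by (rule restr.integrable_R[OF RR TI(2)])
  define X where "X = (\<integral>x. (h x)\<^sup>2 \<partial>?N)"
  define mk where "mk = (\<integral>x. h x \<partial>?N)"
  have ae1: "AE y in ?N. integrable (T y) (\<lambda>x. (h x)\<^sup>2)" by (rule restr.AE_R[OF RR TI(1)])
  have pw: "AE y in ?N. (kop T h y)\<^sup>2 \<le> c * (kop (Tk k) h y)\<^sup>2 + kop T (\<lambda>x. (h x)\<^sup>2) y - c * kop (Tk k) (\<lambda>x. (h x)\<^sup>2) y"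
  proof -
    have "AE y in ?N. integrable (T y) (\<lambda>x. (h x)\<^sup>2) \<longrightarrow> integrable (Tk k y) (\<lambda>x. (h x)\<^sup>2) \<longrightarrow>
       (kop T h y)\<^sup>2 \<le> c * (kop (Tk k) h y)\<^sup>2 + kop T (\<lambda>x. (h x)\<^sup>2) y - c * kop (Tk k) (\<lambda>x. (h x)\<^sup>2) y"
    proof (rule AE_I2, intro impI)
      fix y assume yN: "y \<in> space ?N" and e1: "integrable (T y) (\<lambda>x. (h x)\<^sup>2)"
        and e2: "integrable (Tk k y) (\<lambda>x. (h x)\<^sup>2)"
      have yk: "y \<in> Y k" using yN spN by simp
      have y\<omega>: "y \<in> space \<omega>" using yk Y_sub by blast
      have sT: "sets (T y) = sets \<omega>" by (rule mk_space(2)[OF mT y\<omega>])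
      have sK: "sets (Tk k y) = sets ?N" by (rule mk_space(2)[OF mTk yN])
      show "(kop T h y)\<^sup>2 \<le> c * (kop (Tk k) h y)\<^sup>2 + kop T (\<lambda>x. (h x)\<^sup>2) y - c * kop (Tk k) (\<lambda>x. (h x)\<^sup>2) y"
        unfolding kop_def
      proof (rule dom_ineq)
        show "Y k \<in> sets (T y)" using sT Ys by simp
        show "prob_space (T y)" by (rule mk_space(1)[OF mT y\<omega>])
        show "prob_space (Tk k y)" by (rule mk_space(1)[OF mTk yN])
        show "sets (Tk k y) = sets (restrict_space (T y) (Y k))"
          using sK setsN sets_restrict_space_cong[OF sT] by simp
        show "0 \<le> c" by (rule c0)
        show "c * measure (Tk k y) B \<le> measure (T y) B" if "B \<in> sets (Tk k y)" for B
          using dom[OF yk, of B] that sK by simp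
        show "h \<in> borel_measurable (T y)" using hm measurable_cong_sets[OF sT refl] by blast
        show "integrable (T y) (\<lambda>x. (h x)\<^sup>2)" by (rule e1)
        show "integrable (Tk k y) (\<lambda>x. (h x)\<^sup>2)" by (rule e2)
      qed
    qed
    then show ?thesis using ae1 KI(1) by eventually_elim blast
  qed
  have pint: "integrable ?N (\<lambda>y. c * (kop (Tk k) h y)\<^sup>2 + kop T (\<lambda>x. (h x)\<^sup>2) y - c * kop (Tk k) (\<lambda>x. (h x)\<^sup>2) y)"
    using KL(1) i2 KI(2) by (intro Bochner_Integration.integrable_diff Bochner_Integration.integrable_add Bochner_Integration.integrable_mult_right)
  have st1: "(\<integral>y. (kop T h y)\<^sup>2 \<partial>?N) \<le> (\<integral>y. c * (kop (Tk k) h y)\<^sup>2 + kop T (\<lambda>x. (h x)\<^sup>2) y - c * kop (Tk k) (\<lambda>x. (h x)\<^sup>2) y \<partial>?N)"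
    by (rule integral_mono_AE[OF i1 pint pw])
  also have "\<dots> = c * (\<integral>y. (kop (Tk k) h y)\<^sup>2 \<partial>?N) + (\<integral>y. kop T (\<lambda>x. (h x)\<^sup>2) y \<partial>?N) - c * X"
    using KL(1) i2 KI(2) KI(3) unfolding X_def
    by (simp add: Bochner_Integration.integral_diff Bochner_Integration.integral_add Bochner_Integration.integrable_add)
  finally have st1': "(\<integral>y. (kop T h y)\<^sup>2 \<partial>?N) \<le> c * (\<integral>y. (kop (Tk k) h y)\<^sup>2 \<partial>?N) + (\<integral>y. kop T (\<lambda>x. (h x)\<^sup>2) y \<partial>?N) - c * X" .
  define hc where "hc x = h x - mk" for x
  have hcm: "hc \<in> borel_measurable ?N" unfolding hc_def using hN by measurable
  note HE = sq_expand[OF PN hiN h2N, of mk]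
  have hc2: "integrable ?N (\<lambda>x. (hc x)\<^sup>2)" using HE(1) unfolding hc_def .
  have hc2v: "(\<integral>x. (hc x)\<^sup>2 \<partial>?N) = X - mk\<^sup>2" using HE(2) unfolding hc_def X_def mk_def[symmetric]
    by (simp add: power2_eq_square)
  have ic: "integrable ?N (\<lambda>x. mk)" by (rule finite_measure.integrable_const[OF prob_space.finite_measure[OF PN]])
  have hci: "integrable ?N hc" unfolding hc_def by (rule Bochner_Integration.integrable_diff[OF hiN ic])
  have hc0: "(\<integral>x. hc x \<partial>?N) = 0"
    unfolding hc_def using prob_space.prob_space[OF PN]
    by (subst Bochner_Integration.integral_diff[OF hiN ic]) (simp add: mk_def)
  have hcL: "hc \<in> L2_0 ?N" unfolding L2_0_def using hcm hc2 hc0 by simp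
  define z where "z = kop (Tk k) hc"
  have zb: "L2_norm ?N z \<le> opk k * L2_norm ?N hc" unfolding z_def by (rule opk(3)[OF hcL])
  have zsq: "(\<integral>y. (z y)\<^sup>2 \<partial>?N) \<le> (opk k)\<^sup>2 * (\<integral>x. (hc x)\<^sup>2 \<partial>?N)"
  proof -
    have "(L2_norm ?N z)\<^sup>2 \<le> (opk k * L2_norm ?N hc)\<^sup>2"
      by (rule power_mono[OF zb L2_norm_nonneg])
    then show ?thesis unfolding L2_norm_def by (simp add: power_mult_distrib)
  qed
  note ZI = mk_int[OF PN mTk iTk hci]
  note ZL = mk_L2[OF PN mTk iTk hcm hc2]
  have vz: "AE y in ?N. kop (Tk k) h y = z y - (- mk)"
    using KI(1)
  proof (rule AE_mp, intro AE_I2 impI)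
    fix y assume yN: "y \<in> space ?N" and e: "integrable (Tk k y) (\<lambda>x. (h x)\<^sup>2)"
    have PK: "prob_space (Tk k y)" by (rule mk_space(1)[OF mTk yN])
    have hK: "h \<in> borel_measurable (Tk k y)"
      using hN measurable_cong_sets[OF mk_space(2)[OF mTk yN] refl] by blast
    have ih: "integrable (Tk k y) h"
      by (rule finite_measure.square_integrable_imp_integrable[OF prob_space.finite_measure[OF PK] hK e])
    have icK: "integrable (Tk k y) (\<lambda>x. mk)" by (rule finite_measure.integrable_const[OF prob_space.finite_measure[OF PK]])
    show "kop (Tk k) h y = z y - (- mk)"
      unfolding z_def kop_def hc_def using prob_space.prob_space[OF PK]
      by (simp add: Bochner_Integration.integral_diff[OF ih icK])
  qed
  have v2: "(\<integral>y. (kop (Tk k) h y)\<^sup>2 \<partial>?N) = (\<integral>y. (z y - (- mk))\<^sup>2 \<partial>?N)"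
  proof (rule integral_cong_AE)
    show "(\<lambda>y. (kop (Tk k) h y)\<^sup>2) \<in> borel_measurable ?N" using KL(1) by simp
    show "(\<lambda>y. (z y - (- mk))\<^sup>2) \<in> borel_measurable ?N" unfolding z_def using kop_meas[OF mTk hcm] by measurable
    show "AE y in ?N. (kop (Tk k) h y)\<^sup>2 = (z y - - mk)\<^sup>2" using vz by eventually_elim simp
  qed
  also have "\<dots> = (\<integral>y. (z y)\<^sup>2 \<partial>?N) + mk\<^sup>2"
    using sq_expand(2)[OF PN ZI(2) ZL(1), of "- mk"] ZI(3) hc0 unfolding z_def by simp
  finally have v2': "(\<integral>y. (kop (Tk k) h y)\<^sup>2 \<partial>?N) = (\<integral>y. (z y)\<^sup>2 \<partial>?N) + mk\<^sup>2" .
  have D0: "0 \<le> X - mk\<^sup>2" using jensen_sq[OF PN hN h2N] unfolding X_def mk_def by simp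
  have "(\<integral>y. (kop (Tk k) h y)\<^sup>2 \<partial>?N) \<le> lam2 * (X - mk\<^sup>2) + mk\<^sup>2"
  proof -
    have "(opk k)\<^sup>2 * (X - mk\<^sup>2) \<le> lam2 * (X - mk\<^sup>2)" by (rule mult_right_mono[OF lam(1) D0])
    then show ?thesis using v2' zsq hc2v by simp
  qed
  then have "c * (\<integral>y. (kop (Tk k) h y)\<^sup>2 \<partial>?N) \<le> c * (lam2 * (X - mk\<^sup>2) + mk\<^sup>2)"
    by (rule mult_left_mono[OF _ c0])
  moreover have "c * (lam2 * (X - mk\<^sup>2) + mk\<^sup>2) - c * X = - (c * (1 - lam2) * (X - mk\<^sup>2))"
    by (simp add: algebra_simps)
  ultimately show "(\<integral>y. (kop T h y)\<^sup>2 \<partial>?N) \<le> (\<integral>y. kop T (\<lambda>x. (h x)\<^sup>2) y \<partial>?N)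
       - c * (1 - lam2) * ((\<integral>x. (h x)\<^sup>2 \<partial>?N) - (\<integral>x. h x \<partial>?N)\<^sup>2)"
    using st1' unfolding X_def[symmetric] mk_def[symmetric] by linarith
qed

end

context main begin

definition Ih :: "('a \<Rightarrow> real) \<Rightarrow> 'k \<Rightarrow> real" where
  "Ih F k = (\<integral>y. indicator (Y k) y * F y \<partial>\<omega>)"

definition Mh :: "('a \<Rightarrow> real) \<Rightarrow> 'k \<Rightarrow> real" where
  "Mh h k = (Ih h k)\<^sup>2 / w k"

lemma int_N: "F \<in> borel_measurable \<omega> \<Longrightarrow> (\<integral>x. F x \<partial>restr_prob \<omega> (Y k)) = Ih F k / w k"
  unfolding Ih_def using restr.int_R[OF R, of F k] by simp

lemma Ih_int: "integrable \<omega> F \<Longrightarrow> integrable (count_space UNIV) (Ih F)"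
  "integrable \<omega> F \<Longrightarrow> (\<integral>k. Ih F k \<partial>count_space UNIV) = (\<integral>y. F y \<partial>\<omega>)"
  unfolding Ih_def using part_int[OF prob_space_imp_sigma_finite[OF P] Ys dj cov, of F] by auto

lemma summ:
  assumes hL: "h \<in> L2_0 \<omega>"
  shows "integrable (count_space UNIV) (Mh h)" "\<And>k. 0 \<le> Mh h k"
    "(\<integral>y. (kop T h y)\<^sup>2 \<partial>\<omega>) \<le> (\<integral>x. (h x)\<^sup>2 \<partial>\<omega>)
       - c * (1 - lam2) * ((\<integral>x. (h x)\<^sup>2 \<partial>\<omega>) - (\<integral>k. Mh h k \<partial>count_space UNIV))"
proof -
  note hD = L2_0D[OF hL]
  have hm: "h \<in> borel_measurable \<omega>" and h2: "integrable \<omega> (\<lambda>x. (h x)\<^sup>2)" using hD by auto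
  have hi: "integrable \<omega> h"
    by (rule finite_measure.square_integrable_imp_integrable[OF prob_space.finite_measure[OF P] hm h2])
  note TI = mk_int[OF P mT iT h2]
  note TL = mk_L2[OF P mT iT hm h2]
  have um: "(\<lambda>y. (kop T h y)\<^sup>2) \<in> borel_measurable \<omega>" using TL(1) by simp
  have tm: "kop T (\<lambda>x. (h x)\<^sup>2) \<in> borel_measurable \<omega>" using TI(2) by simp
  have h2m: "(\<lambda>x. (h x)\<^sup>2) \<in> borel_measurable \<omega>" using h2 by simp
  show M0: "0 \<le> Mh h k" for k unfolding Mh_def using wpos[of k] by simp
  have MH: "Mh h k \<le> Ih (\<lambda>x. (h x)\<^sup>2) k" for k
  proof -
    have PN: "prob_space (restr_prob \<omega> (Y k))" by (rule restr.prob_R[OF R])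
    have "(\<integral>x. h x \<partial>restr_prob \<omega> (Y k))\<^sup>2 \<le> (\<integral>x. (h x)\<^sup>2 \<partial>restr_prob \<omega> (Y k))"
      by (rule jensen_sq[OF PN restr.meas_R[OF R hm] restr.integrable_R[OF R h2]])
    then have "(Ih h k / w k)\<^sup>2 \<le> Ih (\<lambda>x. (h x)\<^sup>2) k / w k"
      by (simp add: int_N[OF hm] int_N[OF h2m])
    then have "(Ih h k)\<^sup>2 / w k \<le> Ih (\<lambda>x. (h x)\<^sup>2) k"
      using wpos[of k] by (simp add: power_divide power2_eq_square field_simps)
    then show ?thesis unfolding Mh_def .
  qed
  show MI: "integrable (count_space UNIV) (Mh h)"
  proof (rule Bochner_Integration.integrable_bound[OF Ih_int(1)[OF h2]])
    show "Mh h \<in> borel_measurable (count_space UNIV)" by simp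
    show "AE k in count_space UNIV. norm (Mh h k) \<le> norm (Ih (\<lambda>x. (h x)\<^sup>2) k)"
      using M0 MH by (auto intro!: AE_I2 order.trans[OF _ abs_ge_self])
  qed
  define a where "a = c * (1 - lam2)"
  have pk: "Ih (\<lambda>y. (kop T h y)\<^sup>2) k \<le> Ih (kop T (\<lambda>x. (h x)\<^sup>2)) k - a * (Ih (\<lambda>x. (h x)\<^sup>2) k - Mh h k)" for k
  proof -
    have B: "Ih (\<lambda>y. (kop T h y)\<^sup>2) k / w k \<le> Ih (kop T (\<lambda>x. (h x)\<^sup>2)) k / w k
       - a * (Ih (\<lambda>x. (h x)\<^sup>2) k / w k - (Ih h k / w k)\<^sup>2)"
      using block(3)[OF hL, of k] unfolding a_def
      by (simp add: int_N[OF hm] int_N[OF h2m] int_N[OF um] int_N[OF tm])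
    have wp: "0 < w k" by (rule wpos)
    have "w k * (Ih (\<lambda>y. (kop T h y)\<^sup>2) k / w k) \<le> w k * (Ih (kop T (\<lambda>x. (h x)\<^sup>2)) k / w k
       - a * (Ih (\<lambda>x. (h x)\<^sup>2) k / w k - (Ih h k / w k)\<^sup>2))"
      by (rule mult_left_mono[OF B]) (use wp in simp)
    moreover have "w k * (Ih (\<lambda>y. (kop T h y)\<^sup>2) k / w k) = Ih (\<lambda>y. (kop T h y)\<^sup>2) k" using wp by simp
    moreover have "w k * (Ih (kop T (\<lambda>x. (h x)\<^sup>2)) k / w k
       - a * (Ih (\<lambda>x. (h x)\<^sup>2) k / w k - (Ih h k / w k)\<^sup>2)) =
       Ih (kop T (\<lambda>x. (h x)\<^sup>2)) k - a * (Ih (\<lambda>x. (h x)\<^sup>2) k - (Ih h k)\<^sup>2 / w k)"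
      using wp by (simp add: field_simps power2_eq_square)
    ultimately show ?thesis unfolding Mh_def by simp
  qed
  have i1: "integrable (count_space UNIV) (Ih (\<lambda>y. (kop T h y)\<^sup>2))" by (rule Ih_int(1)[OF TL(1)])
  have i2: "integrable (count_space UNIV) (Ih (kop T (\<lambda>x. (h x)\<^sup>2)))" by (rule Ih_int(1)[OF TI(2)])
  have i3: "integrable (count_space UNIV) (Ih (\<lambda>x. (h x)\<^sup>2))" by (rule Ih_int(1)[OF h2])
  have i4: "integrable (count_space UNIV) (\<lambda>k. Ih (kop T (\<lambda>x. (h x)\<^sup>2)) k - a * (Ih (\<lambda>x. (h x)\<^sup>2) k - Mh h k))"
    using i2 i3 MI by (intro Bochner_Integration.integrable_diff Bochner_Integration.integrable_mult_right)
  have "(\<integral>y. (kop T h y)\<^sup>2 \<partial>\<omega>) = (\<integral>k. Ih (\<lambda>y. (kop T h y)\<^sup>2) k \<partial>count_space UNIV)"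
    by (rule Ih_int(2)[OF TL(1), symmetric])
  also have "\<dots> \<le> (\<integral>k. Ih (kop T (\<lambda>x. (h x)\<^sup>2)) k - a * (Ih (\<lambda>x. (h x)\<^sup>2) k - Mh h k) \<partial>count_space UNIV)"
    by (rule integral_mono_AE[OF i1 i4]) (use pk in auto)
  also have "\<dots> = (\<integral>k. Ih (kop T (\<lambda>x. (h x)\<^sup>2)) k \<partial>count_space UNIV)
      - a * ((\<integral>k. Ih (\<lambda>x. (h x)\<^sup>2) k \<partial>count_space UNIV) - (\<integral>k. Mh h k \<partial>count_space UNIV))"
    using i2 i3 MI
    by (simp add: Bochner_Integration.integral_diff Bochner_Integration.integrable_diff)
  also have "\<dots> = (\<integral>x. (h x)\<^sup>2 \<partial>\<omega>) - a * ((\<integral>x. (h x)\<^sup>2 \<partial>\<omega>) - (\<integral>k. Mh h k \<partial>count_space UNIV))"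
    using Ih_int(2)[OF TI(2)] Ih_int(2)[OF h2] TI(3) by simp
  finally show "(\<integral>y. (kop T h y)\<^sup>2 \<partial>\<omega>) \<le> (\<integral>x. (h x)\<^sup>2 \<partial>\<omega>)
       - c * (1 - lam2) * ((\<integral>x. (h x)\<^sup>2 \<partial>\<omega>) - (\<integral>k. Mh h k \<partial>count_space UNIV))"
    unfolding a_def .
qed

end

context main begin

lemma Mbound:
  assumes g: "g \<in> L2_0 \<omega>" and g1: "(\<integral>x. (g x)\<^sup>2 \<partial>\<omega>) \<le> 1"
  shows "(\<integral>k. Mh (Sstar g) k \<partial>count_space UNIV) \<le> sig"
proof -
  define h where "h = Sstar g"
  have hL: "h \<in> L2_0 \<omega>" unfolding h_def by (rule adj_h(1)[OF g])
  note hD = L2_0D[OF hL] and gD = L2_0D[OF g]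
  have hm: "h \<in> borel_measurable \<omega>" and h2: "integrable \<omega> (\<lambda>x. (h x)\<^sup>2)" and h0: "(\<integral>x. h x \<partial>\<omega>) = 0"
    using hD by auto
  have gm: "g \<in> borel_measurable \<omega>" and g2: "integrable \<omega> (\<lambda>x. (g x)\<^sup>2)" using gD by auto
  have hi: "integrable \<omega> h"
    by (rule finite_measure.square_integrable_imp_integrable[OF prob_space.finite_measure[OF P] hm h2])
  define m where "m k = Ih h k / w k" for k
  define M where "M = (\<integral>k. Mh h k \<partial>count_space UNIV)"
  have Mhm: "Mh h k = w k * (m k)\<^sup>2" for k
    unfolding Mh_def m_def using wne[of k] by (simp add: power2_eq_square field_simps)
  have M0: "0 \<le> M" unfolding M_def by (rule integral_nonneg_AE) (use summ(2)[OF hL] in auto)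
  have m2b: "integrable (bar_measure \<omega> Y) (\<lambda>k. (m k)\<^sup>2)"
    unfolding bar_int_dens using summ(1)[OF hL] unfolding Mhm .
  have m2bv: "(\<integral>k. (m k)\<^sup>2 \<partial>bar_measure \<omega> Y) = M"
    unfolding bar_integral_dens M_def Mhm ..
  have m0b: "(\<integral>k. m k \<partial>bar_measure \<omega> Y) = 0"
  proof -
    have "(\<integral>k. m k \<partial>bar_measure \<omega> Y) = (\<integral>k. Ih h k \<partial>count_space UNIV)"
      unfolding bar_integral_dens m_def using wne by simp
    also have "\<dots> = 0" using Ih_int(2)[OF hi] h0 by simp
    finally show ?thesis .
  qed
  have mL: "m \<in> L2_0 (bar_measure \<omega> Y)" unfolding L2_0_def using bar_meas m2b m0b by simp
  define mt where "mt y = m (idx y)" for y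
  have mtm: "mt \<in> borel_measurable \<omega>" unfolding mt_def by (rule comp_meas)
  have mt2: "integrable \<omega> (\<lambda>y. (mt y)\<^sup>2)" using m2b unfolding bar_int mt_def .
  have mt2v: "(\<integral>y. (mt y)\<^sup>2 \<partial>\<omega>) = M" using m2bv unfolding bar_integral mt_def .
  have mti: "integrable \<omega> mt"
    by (rule finite_measure.square_integrable_imp_integrable[OF prob_space.finite_measure[OF P] mtm mt2])
  have mt0: "(\<integral>y. mt y \<partial>\<omega>) = 0" using m0b unfolding bar_integral mt_def .
  have mtL: "mt \<in> L2_0 \<omega>" unfolding L2_0_def using mtm mt2 mt0 by simp
  have mth: "integrable \<omega> (\<lambda>y. mt y * h y)" by (rule cs_int(1)[OF mtm hm mt2 h2])
  have "(\<integral>y. mt y * h y \<partial>\<omega>) = (\<integral>k. Ih (\<lambda>y. mt y * h y) k \<partial>count_space UNIV)"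
    by (rule Ih_int(2)[OF mth, symmetric])
  also have "\<dots> = M" unfolding M_def
  proof (rule Bochner_Integration.integral_cong[OF refl])
    fix k
    have "Ih (\<lambda>y. mt y * h y) k = (\<integral>y. m k * (indicator (Y k) y * h y) \<partial>\<omega>)"
      unfolding Ih_def mt_def by (rule Bochner_Integration.integral_cong) (auto simp: indicator_def idx_eq)
    also have "\<dots> = m k * Ih h k" unfolding Ih_def by simp
    also have "\<dots> = Mh h k" unfolding Mh_def m_def by (simp add: power2_eq_square)
    finally show "Ih (\<lambda>y. mt y * h y) k = Mh h k" .
  qed
  finally have inner: "(\<integral>y. mt y * h y \<partial>\<omega>) = M" .
  define Pf where "Pf = kop S mt"
  have Pm: "Pf \<in> borel_measurable \<omega>" unfolding Pf_def by (rule kop_meas[OF mS mtm])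
  note PL = mk_L2[OF P mS iS mtm mt2]
  have P2: "integrable \<omega> (\<lambda>y. (Pf y)\<^sup>2)" unfolding Pf_def by (rule PL(1))
  have adjE: "L2_inner \<omega> (kop S mt) g = L2_inner \<omega> mt (Sstar g)"
    using adj mtL g unfolding is_adjoint_def by blast
  have "M\<^sup>2 = (\<integral>y. Pf y * g y \<partial>\<omega>)\<^sup>2"
    using adjE inner unfolding L2_inner_def Pf_def h_def by simp
  also have "\<dots> \<le> (\<integral>y. (Pf y)\<^sup>2 \<partial>\<omega>) * (\<integral>y. (g y)\<^sup>2 \<partial>\<omega>)" by (rule cs_int(2)[OF Pm gm P2 g2])
  also have "\<dots> \<le> (\<integral>y. (Pf y)\<^sup>2 \<partial>\<omega>)"
    using g1 by (intro mult_left_le) (auto intro!: integral_nonneg_AE)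
  finally have MP: "M\<^sup>2 \<le> (\<integral>y. (Pf y)\<^sup>2 \<partial>\<omega>)" .
  have mtai: "integrable \<omega> (\<lambda>x. \<bar>mt x\<bar>)" using mti by simp
  note K1 = mk_int[OF P mS iS mti] and K2 = mk_int[OF P mS iS mtai]
  have ae1: "AE y in \<omega>. integrable (S y) (\<lambda>x. m (idx x))" using K1(1) unfolding mt_def .
  have ae2: "AE y in \<omega>. integrable (S y) (\<lambda>x. \<bar>m (idx x)\<bar>)" using K2(1) unfolding mt_def .
  have Kam: "kop S (\<lambda>x. \<bar>mt x\<bar>) \<in> borel_measurable \<omega>" using K2(2) by simp
  have KL2: "integrable \<omega> (\<lambda>y. (kop S (\<lambda>x. \<bar>mt x\<bar>) y)\<^sup>2)"
    by (rule mk_L2(1)[OF P mS iS]) (use mtm mt2 in auto)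
  have intb1: "integrable \<omega> (\<lambda>y. \<bar>Pf y\<bar> * kop S (\<lambda>x. \<bar>m (idx x)\<bar>) y)"
    using cs_int(1)[of "\<lambda>y. \<bar>Pf y\<bar>" \<omega> "kop S (\<lambda>x. \<bar>mt x\<bar>)"] Pm Kam P2 KL2 unfolding mt_def by simp
  define Z where "Z k = (\<integral>y. Pf y * measure (S y) (Y k) \<partial>\<omega>)" for k
  note G1 = GF[OF Pm ae1 ae2 intb1]
  have PP: "(\<integral>y. (Pf y)\<^sup>2 \<partial>\<omega>) = (\<integral>k. m k * Z k \<partial>count_space UNIV)"
    using G1(2) unfolding Z_def Pf_def mt_def by (simp add: power2_eq_square)
  have intb2: "integrable \<omega> (\<lambda>y. \<bar>measure (S y) (Y k)\<bar> * kop S (\<lambda>x. \<bar>m (idx x)\<bar>) y)" for k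
  proof (rule Bochner_Integration.integrable_bound[OF K2(2)])
    show "(\<lambda>y. \<bar>measure (S y) (Y k)\<bar> * kop S (\<lambda>x. \<bar>m (idx x)\<bar>) y) \<in> borel_measurable \<omega>"
      using sY_meas[of k] Kam unfolding mt_def by measurable
    show "AE y in \<omega>. norm (\<bar>measure (S y) (Y k)\<bar> * kop S (\<lambda>x. \<bar>m (idx x)\<bar>) y) \<le> norm (kop S (\<lambda>x. \<bar>mt x\<bar>) y)"
    proof (rule AE_I2)
      fix y assume y: "y \<in> space \<omega>"
      have "0 \<le> kop S (\<lambda>x. \<bar>mt x\<bar>) y" by (rule kop_nonneg) simp
      then show "norm (\<bar>measure (S y) (Y k)\<bar> * kop S (\<lambda>x. \<bar>m (idx x)\<bar>) y) \<le> norm (kop S (\<lambda>x. \<bar>mt x\<bar>) y)"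
        using sY_b[OF y, of "Y k"] unfolding mt_def by (simp add: abs_mult mult_left_le_one_le)
    qed
  qed
  have Sbar: "kop (bar_kernel \<omega> Y S) m k = Z k / w k" for k
  proof -
    note G2 = GF[OF sY_meas[of k] ae1 ae2 intb2[of k]]
    have "(\<integral>k'. m k' * Q k k' \<partial>count_space UNIV) = (\<integral>y. measure (S y) (Y k) * kop S (\<lambda>x. m (idx x)) y \<partial>\<omega>)"
      using G2(2) unfolding Q_def .
    also have "\<dots> = Z k" unfolding Z_def Pf_def mt_def by (simp add: ac_simps)
    finally show ?thesis unfolding bar_kop by simp
  qed
  have mSm: "(\<integral>k. m k * kop (bar_kernel \<omega> Y S) m k \<partial>bar_measure \<omega> Y) = (\<integral>y. (Pf y)\<^sup>2 \<partial>\<omega>)"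
    unfolding PP bar_integral_dens Sbar using wne by (intro Bochner_Integration.integral_cong) auto
  note BL = mk_L2[OF bar_prob bk_markov bk_inv bar_meas m2b]
  have CSb: "(\<integral>k. m k * kop (bar_kernel \<omega> Y S) m k \<partial>bar_measure \<omega> Y)\<^sup>2 \<le>
      (\<integral>k. (m k)\<^sup>2 \<partial>bar_measure \<omega> Y) * (\<integral>k. (kop (bar_kernel \<omega> Y S) m k)\<^sup>2 \<partial>bar_measure \<omega> Y)"
    by (rule cs_int(2)[OF bar_meas bar_meas m2b BL(1)])
  have sb: "(\<integral>k. (kop (bar_kernel \<omega> Y S) m k)\<^sup>2 \<partial>bar_measure \<omega> Y) \<le> sig\<^sup>2 * M"
  proof -
    have "(L2_norm (bar_measure \<omega> Y) (kop (bar_kernel \<omega> Y S) m))\<^sup>2 \<le> (sig * L2_norm (bar_measure \<omega> Y) m)\<^sup>2"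
      by (rule power_mono[OF sig(3)[OF mL] L2_norm_nonneg])
    then show ?thesis unfolding L2_norm_def m2bv[symmetric] by (simp add: power_mult_distrib)
  qed
  have "(\<integral>y. (Pf y)\<^sup>2 \<partial>\<omega>)\<^sup>2 \<le> M * (sig\<^sup>2 * M)"
    using CSb unfolding mSm m2bv by (rule order.trans) (rule mult_left_mono[OF sb M0])
  then have "(\<integral>y. (Pf y)\<^sup>2 \<partial>\<omega>)\<^sup>2 \<le> (sig * M)\<^sup>2" by (simp add: power2_eq_square ac_simps)
  then have PsM: "(\<integral>y. (Pf y)\<^sup>2 \<partial>\<omega>) \<le> sig * M"
    by (rule power2_le_imp_le) (use sig(1) M0 in simp)
  have "M\<^sup>2 \<le> sig * M" using MP PsM by linarith
  then have "M \<le> sig"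
  proof (cases "M = 0")
    case True then show ?thesis using sig(1) by simp
  next
    case False
    then have "0 < M" using M0 by linarith
    moreover assume "M\<^sup>2 \<le> sig * M"
    ultimately show ?thesis by (simp add: power2_eq_square)
  qed
  then show ?thesis unfolding M_def h_def .
qed

end

context main begin

lemma final:
  "1 - (op_norm \<omega> (kop T \<circ> Sstar))\<^sup>2 \<ge> c\<^sup>2 * (1 - lam2) * (1 - sig)"
proof -
  define a where "a = c * (1 - lam2)"
  have a0: "0 \<le> a" unfolding a_def using c0 lam(3) by simp
  have a1: "a \<le> 1" unfolding a_def using c0 c1 lam(2) lam(3) by (simp add: mult_le_one)
  define B where "B = 1 - a * (1 - sig)"
  have B0: "0 \<le> B" unfolding B_def using a0 a1 sig(1) sig(2) by (simp add: mult_le_one)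
  have bnd: "L2_norm \<omega> ((kop T \<circ> Sstar) g) \<le> sqrt B" if g: "g \<in> L2_0 \<omega>" and gn: "L2_norm \<omega> g \<le> 1" for g
  proof -
    have g1: "(\<integral>x. (g x)\<^sup>2 \<partial>\<omega>) \<le> 1" using gn unfolding L2_norm_def by simp
    define h where "h = Sstar g"
    have hL: "h \<in> L2_0 \<omega>" unfolding h_def by (rule adj_h(1)[OF g])
    have hg: "(\<integral>x. (h x)\<^sup>2 \<partial>\<omega>) \<le> 1" using adj_h(2)[OF g] g1 unfolding h_def by linarith
    have Mb: "(\<integral>k. Mh h k \<partial>count_space UNIV) \<le> sig" unfolding h_def by (rule Mbound[OF g g1])
    have "(\<integral>y. (kop T h y)\<^sup>2 \<partial>\<omega>) \<le> (1 - a) * (\<integral>x. (h x)\<^sup>2 \<partial>\<omega>) + a * (\<integral>k. Mh h k \<partial>count_space UNIV)"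
      using summ(3)[OF hL] unfolding a_def[symmetric] by (simp add: algebra_simps)
    also have "\<dots> \<le> (1 - a) * 1 + a * sig"
      by (intro add_mono mult_left_mono hg Mb a0) (use a1 in simp)
    also have "\<dots> = B" unfolding B_def by (simp add: algebra_simps)
    finally have "(\<integral>y. (kop T h y)\<^sup>2 \<partial>\<omega>) \<le> B" .
    then show ?thesis unfolding L2_norm_def h_def by simp
  qed
  define SS where "SS = {L2_norm \<omega> ((kop T \<circ> Sstar) f) | f. f \<in> L2_0 \<omega> \<and> L2_norm \<omega> f \<le> 1}"
  have on: "op_norm \<omega> (kop T \<circ> Sstar) = Sup SS" unfolding op_norm_def SS_def ..
  have z: "L2_norm \<omega> ((kop T \<circ> Sstar) (\<lambda>x. 0)) \<in> SS" unfolding SS_def using zero_L2_0[of \<omega>]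
    by (auto simp: L2_norm_def)
  have le: "\<And>x. x \<in> SS \<Longrightarrow> x \<le> sqrt B" unfolding SS_def using bnd by blast
  have bdd: "bdd_above SS" by (rule bdd_aboveI[where M="sqrt B"]) (rule le)
  have o0: "0 \<le> op_norm \<omega> (kop T \<circ> Sstar)" unfolding on
    by (rule order.trans[OF L2_norm_nonneg cSup_upper[OF z bdd]])
  have o1: "op_norm \<omega> (kop T \<circ> Sstar) \<le> sqrt B" unfolding on by (rule cSup_least) (use z le in auto)
  have "(op_norm \<omega> (kop T \<circ> Sstar))\<^sup>2 \<le> (sqrt B)\<^sup>2" by (rule power_mono[OF o1 o0])
  then have o2: "(op_norm \<omega> (kop T \<circ> Sstar))\<^sup>2 \<le> B" using B0 by simp
  have "c\<^sup>2 * (1 - lam2) * (1 - sig) \<le> a * (1 - sig)"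
  proof -
    have "c\<^sup>2 \<le> c" using c0 c1 by (simp add: power2_eq_square mult_left_le_one_le)
    then have "c\<^sup>2 * ((1 - lam2) * (1 - sig)) \<le> c * ((1 - lam2) * (1 - sig))"
      by (rule mult_right_mono) (use lam(3) sig(2) in simp)
    then show ?thesis unfolding a_def by (simp add: ac_simps)
  qed
  then show ?thesis using o2 unfolding B_def by linarith
qed

end

theorem mainTheorem3:
  fixes \<omega> :: "'a measure"
    and Y :: "'k::countable \<Rightarrow> 'a set"
    and T S :: "'a \<Rightarrow> 'a measure"
    and Sstar :: "('a \<Rightarrow> real) \<Rightarrow> ('a \<Rightarrow> real)"
    and Tk :: "'k \<Rightarrow> 'a \<Rightarrow> 'a measure"
    and c :: real
  assumes "prob_space \<omega>"
    and "\<And>k. Y k \<in> sets \<omega>"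
    and "disjoint_family Y"
    and "(\<Union>k. Y k) = space \<omega>"
    and "\<And>k. measure \<omega> (Y k) > 0"
    and "markov_kernel \<omega> T" and "invariant \<omega> T"
    and "markov_kernel \<omega> S" and "invariant \<omega> S"
    and "is_adjoint \<omega> S Sstar"
    and "\<And>k. markov_kernel (restr_prob \<omega> (Y k)) (Tk k)"
    and "\<And>k. invariant (restr_prob \<omega> (Y k)) (Tk k)"
    and "0 \<le> c" and "c \<le> 1"
    and "\<And>k y B. y \<in> Y k \<Longrightarrow> B \<in> sets (restr_prob \<omega> (Y k)) \<Longrightarrow>
           measure (T y) B \<ge> c * measure (Tk k y) B"
  shows "1 - (op_norm \<omega> (kop T \<circ> Sstar))\<^sup>2 \<ge>
         c\<^sup>2 * (1 - (SUP k. (op_norm (restr_prob \<omega> (Y k)) (kop (Tk k)))\<^sup>2))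
             * (1 - op_norm (bar_measure \<omega> Y) (kop (bar_kernel \<omega> Y S)))"
proof -
  interpret main \<omega> Y T S Sstar Tk c
    by (rule main.intro) (rule assms; assumption?)+
  show ?thesis by (rule final)
qed

end
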